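(* Let $q$ be a prime power, let $F_1\subsetneq F_0\subseteq\mathbb{F}_q^n$ be linear codes of dimensions $f_1<f_0$, and let $G_E\in\mathbb{F}_q^{e\times n}$ be a matrix (not necessarily of full rank) with row space $E$ such that $F_0\cap E=\{\underline{0}\}$. Let $0\le u\le e$, $v=e-u$, and write $G_E=\begin{bmatrix}G_U\\ G_V\end{bmatrix}$ with $G_U$ the first $u$ rows and $G_V$ the last $v$ rows; let $U$ and $V$ be the row spaces of $G_U$ and $G_V$. Consider the QSS scheme on $n+e$ parties given by the extended CSS code $\mathrm{ECSS}(F_0,F_1,G_E)$ (party $j$ holding the $j$-th encoded qudit). Define $$\tau_u=n-\min\{\mathrm{wt}((F_0+V)\setminus(F_1+V)),\ \mathrm{wt}((F_1+U)^\perp\setminus(F_0+U)^\perp)\}+1.$$ Then for an integer $0\le\tau\le n$, the set $J\cup\{n+1,n+2,\dots,n+u\}$ is authorized for every $J\subseteq[n]$ with $|J|=\tau$ if and only if $\tau\geq\tau_u$.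
   Context: For linear codes $L_1\subsetneq L_0\subseteq\mathbb{F}_q^n$, $\mathrm{wt}(L_0\setminus L_1)=\min\{\mathrm{wt}(\underline{c}):\underline{c}\in L_0,\ \underline{c}\notin L_1\}$ (Hamming weight); $L^\perp$ is the dual code. For a generator matrix $G_{F_0}=\begin{bmatrix}G_{F_0/F_1}\\ G_{F_1}\end{bmatrix}$ of $F_0$ with $G_{F_1}$ a generator matrix of $F_1$ and $G_{F_0/F_1}$ generating a complement of $F_1$ in $F_0$, the extended CSS code $\mathrm{ECSS}(F_0,F_1,G_E)$ is the CSS code of $C_0$ over $C_1$, where $C_0,C_1\subseteq\mathbb{F}_q^{n+e}$ are generated by $\begin{bmatrix}G_{F_0}&0\\ G_E&I_e\end{bmatrix}$ and $\begin{bmatrix}G_{F_1}&0\\ G_E&I_e\end{bmatrix}$ respectively. Its encoding maps, up to normalization and extended linearly, a basis state $|\underline{s}\rangle$, $\underline{s}\in\mathbb{F}_q^{f_0-f_1}$, to $$\sum_{\underline{r}_1\in\mathbb{F}_q^{f_1},\,\underline{r}_2\in\mathbb{F}_q^{e}}\Big|[\,G_{F_0/F_1}^T\ G_{F_1}^T\ G_E^T\,]\begin{bmatrix}\underline{s}\\ \underline{r}_1\\ \underline{r}_2\end{bmatrix}\Big\rangle|\underline{r}_2\rangle,$$ a state of $n+e$ qudits of dimension $q$; qudit $j$ is given to party $j\in[n+e]$. In a QSS scheme, a set of parties is authorized if the secret can be recovered from their shares (and unauthorized if their shares contain no information about the secret). *)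

theory Defs
  imports Complex_Main
begin

text \<open>Vectors of F_q^m are functions nat => 'a vanishing from index m on (0-based indices).
 Matrices with m rows are functions g :: nat => nat => 'a, row k being g k.\<close>

definition words :: "nat \<Rightarrow> (nat \<Rightarrow> 'a::zero) set" where
  "words m = {x. \<forall>i\<ge>m. x i = 0}"

definition lincomb :: "(nat \<Rightarrow> nat \<Rightarrow> 'a::comm_ring_1) \<Rightarrow> nat \<Rightarrow> (nat \<Rightarrow> 'a) \<Rightarrow> (nat \<Rightarrow> 'a)" where
  "lincomb g m c = (\<lambda>i. \<Sum>k<m. c k * g k i)"

definition span_rows :: "(nat \<Rightarrow> nat \<Rightarrow> 'a::comm_ring_1) \<Rightarrow> nat \<Rightarrow> (nat \<Rightarrow> 'a) set" where
  "span_rows g m = {lincomb g m c | c. True}"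

definition lin_indep_rows :: "(nat \<Rightarrow> nat \<Rightarrow> 'a::comm_ring_1) \<Rightarrow> nat \<Rightarrow> bool" where
  "lin_indep_rows g m = (\<forall>c. lincomb g m c = (\<lambda>_. 0) \<longrightarrow> (\<forall>k<m. c k = 0))"

definition stack :: "(nat \<Rightarrow> nat \<Rightarrow> 'a) \<Rightarrow> nat \<Rightarrow> (nat \<Rightarrow> nat \<Rightarrow> 'a) \<Rightarrow> nat \<Rightarrow> nat \<Rightarrow> 'a" where
  "stack g1 m1 g2 = (\<lambda>k. if k < m1 then g1 k else g2 (k - m1))"

definition set_plus_vec :: "(nat \<Rightarrow> 'a::plus) set \<Rightarrow> (nat \<Rightarrow> 'a) set \<Rightarrow> (nat \<Rightarrow> 'a) set" where
  "set_plus_vec A B = {(\<lambda>i. a i + b i) | a b. a \<in> A \<and> b \<in> B}"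

definition wt :: "nat \<Rightarrow> (nat \<Rightarrow> 'a::zero) \<Rightarrow> nat" where
  "wt n x = card {i. i < n \<and> x i \<noteq> 0}"

definition wt_diff :: "nat \<Rightarrow> (nat \<Rightarrow> 'a::zero) set \<Rightarrow> (nat \<Rightarrow> 'a) set \<Rightarrow> nat" where
  "wt_diff n L0 L1 = Min (wt n ` (L0 - L1))"

definition dual :: "nat \<Rightarrow> (nat \<Rightarrow> 'a::comm_ring_1) set \<Rightarrow> (nat \<Rightarrow> 'a) set" where
  "dual n L = {x \<in> words n. \<forall>c\<in>L. (\<Sum>i<n. x i * c i) = 0}"

definition tau_u :: "nat \<Rightarrow> (nat \<Rightarrow> 'a::comm_ring_1) set \<Rightarrow> (nat \<Rightarrow> 'a) set
    \<Rightarrow> (nat \<Rightarrow> nat \<Rightarrow> 'a) \<Rightarrow> nat \<Rightarrow> nat \<Rightarrow> int" where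
  "tau_u n F0 F1 GE e u =
    (let U = span_rows GE u; V = span_rows (\<lambda>k. GE (u + k)) (e - u) in
     int n - int (min (wt_diff n (set_plus_vec F0 V) (set_plus_vec F1 V))
                      (wt_diff n (dual n (set_plus_vec F1 U)) (dual n (set_plus_vec F0 U)))) + 1)"

text \<open>classical part [G_{F0/F1}^T G_{F1}^T G_E^T] (s; r1; r2), of length n\<close>
definition ecss_cw :: "nat \<Rightarrow> nat \<Rightarrow> nat \<Rightarrow> (nat \<Rightarrow> nat \<Rightarrow> 'a::comm_ring_1) \<Rightarrow> (nat \<Rightarrow> nat \<Rightarrow> 'a)
    \<Rightarrow> (nat \<Rightarrow> nat \<Rightarrow> 'a) \<Rightarrow> (nat \<Rightarrow> 'a) \<Rightarrow> (nat \<Rightarrow> 'a) \<Rightarrow> (nat \<Rightarrow> 'a) \<Rightarrow> (nat \<Rightarrow> 'a)" where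
  "ecss_cw f0 f1 e gQ gF1 GE s r1 r2 =
     (\<lambda>i. (\<Sum>k<f0 - f1. s k * gQ k i) + (\<Sum>k<f1. r1 k * gF1 k i) + (\<Sum>k<e. r2 k * GE k i))"

text \<open>the basis word of n+e qudits: first n from c, then r2 (party j <-> index j-1)\<close>
definition join_word :: "nat \<Rightarrow> (nat \<Rightarrow> 'a::zero) \<Rightarrow> (nat \<Rightarrow> 'a) \<Rightarrow> nat \<Rightarrow> 'a" where
  "join_word n c r = (\<lambda>i. if i < n then c i else r (i - n))"

text \<open>amplitude of basis word w in the normalized encoding of the basis secret |s>\<close>
definition ecss_enc :: "nat \<Rightarrow> nat \<Rightarrow> nat \<Rightarrow> nat \<Rightarrow> (nat \<Rightarrow> nat \<Rightarrow> 'a::{finite,field}) \<Rightarrow> (nat \<Rightarrow> nat \<Rightarrow> 'a)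
    \<Rightarrow> (nat \<Rightarrow> nat \<Rightarrow> 'a) \<Rightarrow> (nat \<Rightarrow> 'a) \<Rightarrow> (nat \<Rightarrow> 'a) \<Rightarrow> complex" where
  "ecss_enc n f0 f1 e gQ gF1 GE s w =
     (1 / complex_of_real (sqrt (real (card (UNIV :: 'a set) ^ (f1 + e))))) *
     (\<Sum>r1\<in>words f1. \<Sum>r2\<in>words e.
        if w = join_word n (ecss_cw f0 f1 e gQ gF1 GE s r1 r2) r2 then 1 else 0)"

definition is_density :: "nat \<Rightarrow> ((nat \<Rightarrow> 'a::{finite,zero}) \<Rightarrow> (nat \<Rightarrow> 'a) \<Rightarrow> complex) \<Rightarrow> bool" where
  "is_density k \<rho> =
     ((\<forall>s\<in>words k. \<forall>s'\<in>words k. \<rho> s' s = cnj (\<rho> s s')) \<and>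
      (\<Sum>s\<in>words k. \<rho> s s) = 1 \<and>
      (\<forall>v. Re (\<Sum>s\<in>words k. \<Sum>s'\<in>words k. cnj (v s) * \<rho> s s' * v s') \<ge> 0))"

definition ecss_rho :: "nat \<Rightarrow> nat \<Rightarrow> nat \<Rightarrow> nat \<Rightarrow> (nat \<Rightarrow> nat \<Rightarrow> 'a::{finite,field}) \<Rightarrow> (nat \<Rightarrow> nat \<Rightarrow> 'a)
    \<Rightarrow> (nat \<Rightarrow> nat \<Rightarrow> 'a) \<Rightarrow> ((nat \<Rightarrow> 'a) \<Rightarrow> (nat \<Rightarrow> 'a) \<Rightarrow> complex)
    \<Rightarrow> (nat \<Rightarrow> 'a) \<Rightarrow> (nat \<Rightarrow> 'a) \<Rightarrow> complex" where
  "ecss_rho n f0 f1 e gQ gF1 GE \<rho> w w' =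
     (\<Sum>s\<in>words (f0 - f1). \<Sum>s'\<in>words (f0 - f1).
        \<rho> s s' * ecss_enc n f0 f1 e gQ gF1 GE s w * cnj (ecss_enc n f0 f1 e gQ gF1 GE s' w'))"

text \<open>basis words of the qudits in A (the share of the parties in A)\<close>
definition words_on :: "nat \<Rightarrow> nat set \<Rightarrow> (nat \<Rightarrow> 'a::zero) set" where
  "words_on N A = {x \<in> words N. \<forall>i. i \<notin> A \<longrightarrow> x i = 0}"

definition partial_trace :: "nat \<Rightarrow> nat set \<Rightarrow> ((nat \<Rightarrow> 'a::{finite,monoid_add}) \<Rightarrow> (nat \<Rightarrow> 'a) \<Rightarrow> complex)
    \<Rightarrow> (nat \<Rightarrow> 'a) \<Rightarrow> (nat \<Rightarrow> 'a) \<Rightarrow> complex" where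
  "partial_trace N A R x y =
     (\<Sum>z\<in>words_on N ({..<N} - A). R (\<lambda>i. x i + z i) (\<lambda>i. y i + z i))"

text \<open>A set A of parties is authorized if some quantum channel (Kraus operators K_i from
  the space of A's qudits to the secret space, sum K_i^* K_i = I) recovers every encoded
  secret state from the reduced state on A.\<close>
definition ecss_authorized :: "nat \<Rightarrow> nat \<Rightarrow> nat \<Rightarrow> nat \<Rightarrow> (nat \<Rightarrow> nat \<Rightarrow> 'a::{finite,field}) \<Rightarrow> (nat \<Rightarrow> nat \<Rightarrow> 'a)
    \<Rightarrow> (nat \<Rightarrow> nat \<Rightarrow> 'a) \<Rightarrow> nat set \<Rightarrow> bool" where
  "ecss_authorized n f0 f1 e gQ gF1 GE A =
    (\<exists>(m::nat) (K :: nat \<Rightarrow> (nat \<Rightarrow> 'a) \<Rightarrow> (nat \<Rightarrow> 'a) \<Rightarrow> complex).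
       (\<forall>x\<in>words_on (n + e) A. \<forall>y\<in>words_on (n + e) A.
          (\<Sum>i<m. \<Sum>s\<in>words (f0 - f1). cnj (K i s x) * K i s y) = (if x = y then 1 else 0)) \<and>
       (\<forall>\<rho>. is_density (f0 - f1) \<rho> \<longrightarrow>
          (\<forall>s\<in>words (f0 - f1). \<forall>s'\<in>words (f0 - f1).
             (\<Sum>i<m. \<Sum>x\<in>words_on (n + e) A. \<Sum>y\<in>words_on (n + e) A.
                K i s x * partial_trace (n + e) A (ecss_rho n f0 f1 e gQ gF1 GE \<rho>) x y * cnj (K i s' y))
             = \<rho> s s')))"

end

theory Submission
  imports Defs "HOL-Library.Function_Algebras"
begin

definition ip :: "nat \<Rightarrow> (nat \<Rightarrow> 'a::comm_ring_1) \<Rightarrow> (nat \<Rightarrow> 'a) \<Rightarrow> 'a" where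
  "ip n x y = (\<Sum>i<n. x i * y i)"

lemma sum_split_add: "(\<Sum>k<a+(b::nat). f k) = (\<Sum>k<a. f k) + (\<Sum>k<b. f (a+k))"
  by (induction b) (simp_all add: add.assoc)

lemma words_add: "x \<in> words m \<Longrightarrow> y \<in> words m \<Longrightarrow> (x::nat\<Rightarrow>'a::monoid_add) + y \<in> words m"
  by (simp add: words_def)
lemma words_diff: "x \<in> words m \<Longrightarrow> y \<in> words m \<Longrightarrow> (x::nat\<Rightarrow>'a::ab_group_add) - y \<in> words m"
  by (simp add: words_def)
lemma words_zero[simp]: "0 \<in> words m"
  by (simp add: words_def)
lemma words_zero'[simp]: "(\<lambda>_. 0) \<in> words m"
  by (simp add: words_def)

lemma words_Suc: "words (Suc m) = (\<lambda>(f,a). f(m:=a)) ` (words m \<times> (UNIV::'a::zero set))"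
proof
  show "words (Suc m) \<subseteq> (\<lambda>(f,a). f(m:=a)) ` (words m \<times> (UNIV::'a set))"
  proof
    fix x :: "nat \<Rightarrow> 'a" assume x: "x \<in> words (Suc m)"
    have "x = (\<lambda>(f,a). f(m:=a)) (x(m:=0), x m)" by simp
    moreover have "x(m:=0) \<in> words m" using x by (auto simp: words_def)
    ultimately show "x \<in> (\<lambda>(f,a). f(m:=a)) ` (words m \<times> (UNIV::'a set))" by blast
  qed
  show "(\<lambda>(f,a). f(m:=a)) ` (words m \<times> (UNIV::'a set)) \<subseteq> words (Suc m)"
    by (auto simp: words_def)
qed

lemma words_inj: "inj_on (\<lambda>(f,a). f(m:=a)) (words m \<times> (UNIV::'a::zero set))"
proof (rule inj_onI, clarify)
  fix f g :: "nat \<Rightarrow> 'a" and a b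
  assume f: "f \<in> words m" and g: "g \<in> words m" and eq: "f(m := a) = g(m := b)"
  have "a = b" using fun_cong[OF eq, of m] by simp
  moreover have "f = g"
  proof
    fix i show "f i = g i"
      using fun_cong[OF eq, of i] f g by (cases "i = m") (auto simp: words_def)
  qed
  ultimately show "f = g \<and> a = b" by simp
qed

lemma words_0: "words 0 = {0}"
  by (auto simp: words_def fun_eq_iff)

lemma finite_card_words:
  "finite (words m :: (nat \<Rightarrow> 'a::{finite,zero}) set) \<and> card (words m :: (nat \<Rightarrow> 'a) set) = card (UNIV::'a set)^m"
proof (induction m)
  case 0 then show ?case by (simp add: words_0)
next
  case (Suc m)
  have "card (words (Suc m) :: (nat \<Rightarrow> 'a) set) = card ((words m :: (nat \<Rightarrow> 'a) set) \<times> (UNIV::'a set))"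
    unfolding words_Suc by (intro card_image words_inj)
  then show ?case using Suc unfolding words_Suc by (simp add: card_cartesian_product)
qed

lemma finite_words[simp]: "finite (words m :: (nat \<Rightarrow> 'a::{finite,zero}) set)"
  using finite_card_words by blast
lemma card_words: "card (words m :: (nat \<Rightarrow> 'a::{finite,zero}) set) = card (UNIV::'a set)^m"
  using finite_card_words by blast

lemma lincomb_split_stack:
  "lincomb (stack g1 m1 g2) (m1 + m2) c = (\<lambda>i. lincomb g1 m1 c i + lincomb g2 m2 (\<lambda>k. c (m1 + k)) i)"
proof
  fix i
  have "lincomb (stack g1 m1 g2) (m1 + m2) c i
      = (\<Sum>k<m1. c k * stack g1 m1 g2 k i) + (\<Sum>k<m2. c (m1+k) * stack g1 m1 g2 (m1+k) i)"
    unfolding lincomb_def by (rule sum_split_add)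
  also have "(\<Sum>k<m1. c k * stack g1 m1 g2 k i) = lincomb g1 m1 c i"
    unfolding lincomb_def stack_def by (rule sum.cong) auto
  also have "(\<Sum>k<m2. c (m1+k) * stack g1 m1 g2 (m1+k) i) = lincomb g2 m2 (\<lambda>k. c (m1 + k)) i"
    unfolding lincomb_def stack_def by simp
  finally show "lincomb (stack g1 m1 g2) (m1 + m2) c i = lincomb g1 m1 c i + lincomb g2 m2 (\<lambda>k. c (m1 + k)) i" .
qed

lemma ip_lincomb: "ip n y (lincomb g m c) = (\<Sum>k<m. c k * ip n y (g k))"
  unfolding ip_def lincomb_def
  by (simp add: sum_distrib_left sum_distrib_right mult_ac sum.swap[of _ "{..<n}"])

lemma ip_add: "ip n y (x + z) = ip n y x + ip n y z"
  unfolding ip_def by (simp add: sum.distrib distrib_left)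
lemma ip_diff: "ip n y ((x::nat\<Rightarrow>'a::comm_ring_1) - z) = ip n y x - ip n y z"
  unfolding ip_def by (simp add: sum_subtractf right_diff_distrib)
lemma ip_add_left: "ip n (x + z) y = ip n x y + ip n z y"
  unfolding ip_def by (simp add: sum.distrib distrib_right)

lemma lincomb_add: "lincomb g m c + lincomb g m d = lincomb g m (\<lambda>k. c k + d k)"
  unfolding lincomb_def by (simp add: fun_eq_iff sum.distrib distrib_right)
lemma lincomb_diff: "lincomb g m c - lincomb g m d = lincomb g m (\<lambda>k. c k - d k)"
  unfolding lincomb_def by (simp add: fun_eq_iff sum_subtractf left_diff_distrib)
lemma lincomb_zero: "lincomb g m (\<lambda>_. 0) = 0"
  unfolding lincomb_def by (simp add: fun_eq_iff)
lemma lincomb_words: "\<forall>k<m. g k \<in> words n \<Longrightarrow> lincomb g m c \<in> words n"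
  unfolding lincomb_def words_def by simp

lemma words_on_add: "x \<in> words_on N A \<Longrightarrow> y \<in> words_on N A \<Longrightarrow> (x::nat\<Rightarrow>'a::monoid_add) + y \<in> words_on N A"
  by (simp add: words_on_def words_def)
lemma words_on_diff: "x \<in> words_on N A \<Longrightarrow> y \<in> words_on N A \<Longrightarrow> (x::nat\<Rightarrow>'a::ab_group_add) - y \<in> words_on N A"
  by (simp add: words_on_def words_def)
lemma finite_words_on[simp]: "finite (words_on N A :: (nat \<Rightarrow> 'a::{finite,zero}) set)"
  unfolding words_on_def by simp

definition cst :: "'a::finite itself \<Rightarrow> nat \<Rightarrow> complex" where
  "cst _ k = 1 / complex_of_real (sqrt (real (card (UNIV::'a set) ^ k)))"

lemma cst_cnj: "cnj (cst TYPE('a::finite) k) = cst TYPE('a) k"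
  unfolding cst_def by simp

lemma cst_sq: "cst TYPE('a::finite) k * cst TYPE('a) k * of_nat (card (UNIV::'a set) ^ k) = 1"
proof -
  have pos: "real (card (UNIV::'a set) ^ k) > 0" by (simp add: finite_UNIV_card_ge_0)
  have "cst TYPE('a) k * cst TYPE('a) k = 1 / complex_of_real (real (card (UNIV::'a set) ^ k))"
    unfolding cst_def using pos
    by (simp add: of_real_mult[symmetric] del: of_real_mult of_real_power of_real_of_nat_eq)
  then show ?thesis using pos by (simp del: of_nat_power)
qed



lemma PT_eq: "partial_trace N A R x y = (\<Sum>z\<in>words_on N ({..<N} - A). R (x + z) (y + z))"
  unfolding partial_trace_def plus_fun_def by simp

lemma sum2_delta:
  assumes "finite A" "finite B" "a \<in> A" "b \<in> B"
  shows "(\<Sum>x\<in>A. \<Sum>y\<in>B. if x = a \<and> y = b then K else 0) = K"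
proof -
  have "(\<Sum>y\<in>B. if x = a \<and> y = b then K else 0) = (if x = a then K else 0)" for x
    using assms by (cases "x = a") simp_all
  then show ?thesis using assms by simp
qed

lemma sum2_delta_mult:
  assumes "finite A" "finite B" "a \<in> A" "b \<in> B"
  shows "(\<Sum>x\<in>A. \<Sum>y\<in>B. (if x = a then 1 else 0) * P x y * (if y = b then 1 else 0)) = (P a b :: 'c::comm_ring_1)"
proof -
  have "(\<Sum>x\<in>A. \<Sum>y\<in>B. (if x = a then 1 else 0) * P x y * (if y = b then 1 else 0))
      = (\<Sum>x\<in>A. \<Sum>y\<in>B. if x = a \<and> y = b then P a b else 0)"
    by (intro sum.cong refl) auto
  then show ?thesis using sum2_delta[OF assms] by simp
qed

definition piA :: "nat set \<Rightarrow> (nat \<Rightarrow> 'a::zero) \<Rightarrow> nat \<Rightarrow> 'a" where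
  "piA A c = (\<lambda>i. if i \<in> A then c i else 0)"
definition piB :: "nat set \<Rightarrow> (nat \<Rightarrow> 'a::zero) \<Rightarrow> nat \<Rightarrow> 'a" where
  "piB A c = (\<lambda>i. if i \<in> A then 0 else c i)"


lemma Re_cnj_mult_ge: "Re (cnj z * z) \<ge> 0"
proof -
  have "cnj z * z = of_real ((norm z)\<^sup>2)" using complex_norm_square[of z] by (simp add: mult.commute)
  then show ?thesis by simp
qed

lemma sum_if_restrict: "finite A \<Longrightarrow> B \<subseteq> A \<Longrightarrow> (\<Sum>x\<in>A. if x \<in> B then g x else 0) = sum g B"
  using sum.inter_restrict[of A g B] by (simp add: Int_absorb1)

lemma is_density_delta:
  assumes a: "a \<in> words k"
  shows "is_density k (\<lambda>s s'. if s = a \<and> s' = a then 1 else 0 :: complex)"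
  unfolding is_density_def
proof (intro conjI allI ballI)
  show "(\<Sum>s\<in>words k. if s = a \<and> s = a then 1 else 0 :: complex) = 1" using a by simp
next
  fix v :: "(nat \<Rightarrow> 'a) \<Rightarrow> complex"
  have "(\<Sum>s\<in>words k. \<Sum>s'\<in>words k. cnj (v s) * (if s = a \<and> s' = a then 1 else 0) * v s')
      = (\<Sum>s\<in>words k. \<Sum>s'\<in>words k. if s = a \<and> s' = a then cnj (v a) * v a else 0)"
    by (intro sum.cong refl) auto
  also have "\<dots> = cnj (v a) * v a" by (rule sum2_delta[OF finite_words finite_words a a])
  finally show "0 \<le> Re (\<Sum>s\<in>words k. \<Sum>s'\<in>words k. cnj (v s) * (if s = a \<and> s' = a then 1 else 0) * v s')"
    using Re_cnj_mult_ge by simp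
qed auto

lemma is_density_P:
  assumes P: "P \<subseteq> words k" "card P = 2"
  shows "is_density k (\<lambda>s s'. if s \<in> P \<and> s' \<in> P then 1/2 else 0 :: complex)"
  unfolding is_density_def
proof (intro conjI allI ballI)
  have fP: "finite P" using P finite_subset finite_words by blast
  have "(\<Sum>s\<in>words k. if s \<in> P \<and> s \<in> P then 1/2 else 0 :: complex) = (\<Sum>s\<in>words k. if s \<in> P then 1/2 else 0)"
    by simp
  also have "\<dots> = (\<Sum>s\<in>P. 1/2)" by (rule sum_if_restrict[OF finite_words P(1)])
  also have "\<dots> = 1" using P(2) by simp
  finally show "(\<Sum>s\<in>words k. if s \<in> P \<and> s \<in> P then 1/2 else 0 :: complex) = 1" .
next
  fix v :: "(nat \<Rightarrow> 'a) \<Rightarrow> complex"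
  have "(\<Sum>s\<in>words k. \<Sum>s'\<in>words k. cnj (v s) * (if s \<in> P \<and> s' \<in> P then 1/2 else 0) * v s')
      = (\<Sum>s\<in>words k. if s \<in> P then (\<Sum>s'\<in>words k. if s' \<in> P then 1/2 * cnj (v s) * v s' else 0) else 0)"
    by (intro sum.cong refl) (auto intro!: sum.cong)
  also have "\<dots> = (\<Sum>s\<in>P. \<Sum>s'\<in>P. 1/2 * cnj (v s) * v s')"
    by (simp add: sum_if_restrict[OF finite_words P(1)])
  also have "\<dots> = 1/2 * (\<Sum>s\<in>P. \<Sum>s'\<in>P. cnj (v s) * v s')"
    by (simp add: sum_distrib_left mult.assoc)
  also have "(\<Sum>s\<in>P. \<Sum>s'\<in>P. cnj (v s) * v s') = (\<Sum>s\<in>P. cnj (v s)) * (\<Sum>s'\<in>P. v s')"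
    by (rule sum_product[symmetric])
  also have "\<dots> = cnj (\<Sum>s\<in>P. v s) * (\<Sum>s\<in>P. v s)" by simp
  finally have eq: "(\<Sum>s\<in>words k. \<Sum>s'\<in>words k. cnj (v s) * (if s \<in> P \<and> s' \<in> P then 1/2 else 0) * v s')
     = 1/2 * (cnj (\<Sum>s\<in>P. v s) * (\<Sum>s\<in>P. v s))" .
  have r: "Re (1/2 * X) = Re X / 2" for X :: complex by simp
  show "0 \<le> Re (\<Sum>s\<in>words k. \<Sum>s'\<in>words k. cnj (v s) * (if s \<in> P \<and> s' \<in> P then 1/2 else 0) * v s')"
    unfolding eq r using Re_cnj_mult_ge[of "\<Sum>s\<in>P. v s"] by linarith
qed auto

lemma is_density_D:
  assumes P: "P \<subseteq> words k" "card P = 2"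
  shows "is_density k (\<lambda>s s'. if s = s' \<and> s \<in> P then 1/2 else 0 :: complex)"
  unfolding is_density_def
proof (intro conjI allI ballI)
  have "(\<Sum>s\<in>words k. if s = s \<and> s \<in> P then 1/2 else 0 :: complex) = (\<Sum>s\<in>words k. if s \<in> P then 1/2 else 0)"
    by simp
  also have "\<dots> = (\<Sum>s\<in>P. 1/2)" by (rule sum_if_restrict[OF finite_words P(1)])
  also have "\<dots> = 1" using P(2) by simp
  finally show "(\<Sum>s\<in>words k. if s = s \<and> s \<in> P then 1/2 else 0 :: complex) = 1" .
next
  fix v :: "(nat \<Rightarrow> 'a) \<Rightarrow> complex"
  have "(\<Sum>s\<in>words k. \<Sum>s'\<in>words k. cnj (v s) * (if s = s' \<and> s \<in> P then 1/2 else 0) * v s')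
      = (\<Sum>s\<in>words k. \<Sum>s'\<in>words k. if s' = s then (if s \<in> P then 1/2 * (cnj (v s) * v s) else 0) else 0)"
    by (intro sum.cong refl) auto
  also have "\<dots> = (\<Sum>s\<in>words k. if s \<in> P then 1/2 * (cnj (v s) * v s) else 0)"
    by (intro sum.cong refl) simp
  finally have eq: "(\<Sum>s\<in>words k. \<Sum>s'\<in>words k. cnj (v s) * (if s = s' \<and> s \<in> P then 1/2 else 0) * v s')
      = (\<Sum>s\<in>words k. if s \<in> P then 1/2 * (cnj (v s) * v s) else 0)" .
  have "0 \<le> (\<Sum>s\<in>words k. Re (if s \<in> P then 1/2 * (cnj (v s) * v s) else 0))"
    by (intro sum_nonneg) (use Re_cnj_mult_ge in auto)
  then show "0 \<le> Re (\<Sum>s\<in>words k. \<Sum>s'\<in>words k. cnj (v s) * (if s = s' \<and> s \<in> P then 1/2 else 0) * v s')"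
    unfolding eq by (simp add: Re_sum)
qed auto


lemma lincomb_cong: "(\<And>k. k < m \<Longrightarrow> c k = d k) \<Longrightarrow> lincomb g m c = lincomb g m d"
  unfolding lincomb_def by (intro ext sum.cong) auto

lemma lincomb_unit: "k < m \<Longrightarrow> lincomb g m (\<lambda>j. if j = k then 1 else 0) = g k"
  unfolding lincomb_def by (simp add: fun_eq_iff if_distrib[of "\<lambda>x. x * _"] cong: if_cong)

lemma lincomb_split: "lincomb g (a + b) c = (\<lambda>i. lincomb g a c i + lincomb (\<lambda>k. g (a+k)) b (\<lambda>k. c (a+k)) i)"
  unfolding lincomb_def by (simp add: sum_split_add)

lemma lincomb_Suc: "lincomb g (Suc m) c = (\<lambda>i. lincomb g m c i + c m * g m i)"
  unfolding lincomb_def by simp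

lemma ip_lin_left: "ip n (\<lambda>i. a i - c * b i) x = ip n a x - c * ip n b x"
  unfolding ip_def by (simp add: sum_subtractf sum_distrib_left left_diff_distrib mult.assoc)

lemma ip_lin_right: "ip n y (\<lambda>i. w i - c * g i) = ip n y w - c * ip n y g"
  unfolding ip_def by (simp add: sum_subtractf sum_distrib_left right_diff_distrib mult_ac)

lemma farkas:
  fixes g :: "nat \<Rightarrow> nat \<Rightarrow> 'a::field"
  assumes "\<forall>k<m. g k \<in> words n" "w \<in> words n" "w \<notin> span_rows g m"
  shows "\<exists>y\<in>words n. (\<forall>k<m. ip n y (g k) = 0) \<and> ip n y w \<noteq> 0"
  using assms
proof (induction m arbitrary: w)
  case 0
  have "w \<noteq> (\<lambda>i. 0)" using 0 unfolding span_rows_def lincomb_def by auto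
  then obtain i where i: "w i \<noteq> 0" by auto
  have iN: "i < n"
  proof (rule ccontr)
    assume "\<not> i < n"
    then have "w i = 0" using 0(2) unfolding words_def by simp
    then show False using i by simp
  qed
  let ?y = "\<lambda>j. if j = i then 1 else (0::'a)"
  have "ip n ?y w = w i" unfolding ip_def using iN by (simp add: if_distrib[of "\<lambda>x. x * _"] cong: if_cong)
  moreover have "?y \<in> words n" using iN unfolding words_def by auto
  ultimately show ?case using i by (intro bexI[of _ ?y]) auto
next
  case (Suc m)
  have gw: "\<forall>k<m. g k \<in> words n" using Suc.prems by auto
  have gm: "g m \<in> words n" using Suc.prems by auto
  have nspan: "v \<notin> span_rows g m" if "v \<notin> span_rows g (Suc m)" for v
  proof
    assume "v \<in> span_rows g m"
    then obtain c where "v = lincomb g m c" unfolding span_rows_def by blast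
    moreover have "lincomb g (Suc m) (c(m := 0)) = lincomb g m c"
      unfolding lincomb_Suc by (simp add: lincomb_cong[of m "c(m:=0)" c])
    ultimately have "v = lincomb g (Suc m) (c(m := 0))" by simp
    then have "v \<in> span_rows g (Suc m)" unfolding span_rows_def by blast
    then show False using that by blast
  qed
  obtain y1 where y1: "y1 \<in> words n" "\<forall>k<m. ip n y1 (g k) = 0" "ip n y1 w \<noteq> 0"
    using Suc.IH[OF gw Suc.prems(2) nspan[OF Suc.prems(3)]] by blast
  show ?case
  proof (cases "ip n y1 (g m) = 0")
    case True
    then have "\<forall>k<Suc m. ip n y1 (g k) = 0" using y1(2) less_Suc_eq by auto
    then show ?thesis using y1 by blast
  next
    case False
    define a where "a = ip n y1 (g m)"
    define l where "l = ip n y1 w / a"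
    define w' where "w' = (\<lambda>i. w i - l * g m i)"
    have w'w: "w' \<in> words n" using Suc.prems(2) gm unfolding w'_def words_def by auto
    have w'n: "w' \<notin> span_rows g m"
    proof
      assume "w' \<in> span_rows g m"
      then obtain c where c: "w' = lincomb g m c" unfolding span_rows_def by blast
      have "lincomb g (Suc m) (c(m := l)) = (\<lambda>i. lincomb g m c i + l * g m i)"
        unfolding lincomb_Suc by (simp add: lincomb_cong[of m "c(m:=l)" c])
      also have "\<dots> = w" unfolding c[symmetric] w'_def by simp
      finally have "w = lincomb g (Suc m) (c(m := l))" by simp
      then have "w \<in> span_rows g (Suc m)" unfolding span_rows_def by blast
      then show False using Suc.prems(3) by blast
    qed
    obtain y2 where y2: "y2 \<in> words n" "\<forall>k<m. ip n y2 (g k) = 0" "ip n y2 w' \<noteq> 0"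
      using Suc.IH[OF gw w'w w'n] by blast
    define mu where "mu = ip n y2 (g m) / a"
    define y where "y = (\<lambda>i. y2 i - mu * y1 i)"
    have a0: "a \<noteq> 0" using False a_def by simp
    have yw: "y \<in> words n" using y1(1) y2(1) unfolding y_def words_def by auto
    have "\<forall>k<Suc m. ip n y (g k) = 0"
    proof (intro allI impI)
      fix k assume "k < Suc m"
      then consider "k < m" | "k = m" by linarith
      then show "ip n y (g k) = 0"
      proof cases
        case 1 then show ?thesis using y1(2) y2(2) unfolding y_def ip_lin_left by simp
      next
        case 2 then show ?thesis unfolding y_def ip_lin_left mu_def using a0 unfolding a_def by simp
      qed
    qed
    moreover have "ip n y w = ip n y2 w'"
    proof -
      have "ip n y w = ip n y2 w - mu * ip n y1 w" unfolding y_def ip_lin_left ..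
      also have "mu * ip n y1 w = l * ip n y2 (g m)" unfolding mu_def l_def using a0 by (simp add: field_simps)
      also have "ip n y2 w - l * ip n y2 (g m) = ip n y2 w'" unfolding w'_def ip_lin_right ..
      finally show ?thesis .
    qed
    ultimately show ?thesis using yw y2(3) by auto
  qed
qed

locale ecss =
  fixes n f0 f1 e :: nat and gQ gF1 GE :: "nat \<Rightarrow> nat \<Rightarrow> 'a::{finite,field}"
  assumes f1_lt: "f1 < f0"
    and gQ_w: "\<forall>k<f0 - f1. gQ k \<in> words n"
    and gF1_w: "\<forall>k<f1. gF1 k \<in> words n"
    and indep: "lin_indep_rows (stack gQ (f0 - f1) gF1) f0"
    and GE_w: "\<forall>k<e. GE k \<in> words n"
    and disj: "span_rows (stack gQ (f0 - f1) gF1) f0 \<inter> span_rows GE e = {(\<lambda>_. 0)}"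
begin

abbreviation "stk \<equiv> stack gQ (f0 - f1) gF1"
abbreviation "S \<equiv> words (f0 - f1) :: (nat \<Rightarrow> 'a) set"
abbreviation "NN \<equiv> n + e"

definition cw where "cw s r1 r2 = ecss_cw f0 f1 e gQ gF1 GE s r1 r2"
definition E where "E s r1 r2 = join_word n (cw s r1 r2) r2"
definition W where "W s = {E s r1 r2 | r1 r2. r1 \<in> words f1 \<and> r2 \<in> words e}"

lemma f0_eq: "f0 = (f0 - f1) + f1" using f1_lt by simp

lemma stk_w: "\<forall>k<f0. stk k \<in> words n"
  using gQ_w gF1_w f1_lt by (auto simp: stack_def)

lemma cw_lincomb: "cw s r1 r2 = lincomb stk f0 (\<lambda>k. if k < f0 - f1 then s k else r1 (k - (f0 - f1))) + lincomb GE e r2"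
proof -
  have "lincomb stk f0 (\<lambda>k. if k < f0 - f1 then s k else r1 (k - (f0 - f1)))
     = lincomb stk ((f0 - f1) + f1) (\<lambda>k. if k < f0 - f1 then s k else r1 (k - (f0 - f1)))"
    using f0_eq by simp
  also have "\<dots> = (\<lambda>i. lincomb gQ (f0 - f1) (\<lambda>k. if k < f0 - f1 then s k else r1 (k - (f0 - f1))) i + lincomb gF1 f1 r1 i)"
    by (simp add: lincomb_split_stack)
  also have "\<dots> = (\<lambda>i. lincomb gQ (f0 - f1) s i + lincomb gF1 f1 r1 i)"
    unfolding lincomb_def by (intro ext arg_cong2[where f="(+)"] sum.cong) auto
  finally show ?thesis
    unfolding cw_def ecss_cw_def lincomb_def by (simp add: fun_eq_iff)
qed

lemma cw_words: "cw s r1 r2 \<in> words n"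
  unfolding cw_lincomb using lincomb_words[OF stk_w] lincomb_words[OF GE_w] words_add by blast

lemma KeyX: assumes "lincomb stk f0 c = lincomb GE e d" shows "\<forall>k<f0. c k = 0"
proof -
  have "lincomb stk f0 c \<in> span_rows stk f0" unfolding span_rows_def by blast
  moreover have "lincomb stk f0 c \<in> span_rows GE e" unfolding span_rows_def assms by blast
  ultimately have "lincomb stk f0 c = (\<lambda>_. 0)" using disj by blast
  then show ?thesis using indep unfolding lin_indep_rows_def by blast
qed

lemma E_words: "r2 \<in> words e \<Longrightarrow> E s r1 r2 \<in> words NN"
  unfolding E_def join_word_def words_def by auto

lemma E_add: "E (s + s') (r1 + r1') (r2 + r2') = E s r1 r2 + E s' r1' r2'"
  unfolding E_def join_word_def cw_def ecss_cw_def
  by (simp add: fun_eq_iff sum.distrib distrib_right)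

lemma E_diff: "E (s - s') (r1 - r1') (r2 - r2') = E s r1 r2 - E s' r1' r2'"
  unfolding E_def join_word_def cw_def ecss_cw_def
  by (simp add: fun_eq_iff sum_subtractf left_diff_distrib)

lemma E_zero: assumes "s \<in> S" "r1 \<in> words f1" "r2 \<in> words e" "E s r1 r2 = 0"
  shows "s = 0 \<and> r1 = 0 \<and> r2 = 0"
proof -
  have r2: "r2 = 0"
  proof
    fix k show "r2 k = 0 k" using fun_cong[OF assms(4), of "n + k"] by (simp add: E_def join_word_def)
  qed
  have cw0: "cw s r1 r2 = 0"
  proof
    fix i show "cw s r1 r2 i = 0 i"
    proof (cases "i < n")
      case True then show ?thesis using fun_cong[OF assms(4), of i] by (simp add: E_def join_word_def)
    next
      case False then show ?thesis using cw_words[of s r1 r2] by (simp add: words_def)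
    qed
  qed
  have z: "lincomb GE e 0 = 0" by (simp add: lincomb_def fun_eq_iff)
  have "lincomb stk f0 (\<lambda>k. if k < f0 - f1 then s k else r1 (k - (f0 - f1))) = 0"
    using cw0 unfolding cw_lincomb r2 z by simp
  then have "lincomb stk f0 (\<lambda>k. if k < f0 - f1 then s k else r1 (k - (f0 - f1))) = lincomb GE e (\<lambda>_. 0)"
    by (simp add: lincomb_def zero_fun_def)
  then have c: "\<forall>k<f0. (if k < f0 - f1 then s k else r1 (k - (f0 - f1))) = 0" by (rule KeyX)
  have "s = 0"
  proof
    fix k show "s k = 0 k"
      using c[rule_format, of k] assms(1) f1_lt by (cases "k < f0 - f1") (auto simp: words_def)
  qed
  moreover have "r1 = 0"
  proof
    fix k show "r1 k = 0 k"
    proof (cases "k < f1")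
      case True
      have lt: "f0 - f1 + k < f0" using True f1_lt by linarith
      have "(if f0 - f1 + k < f0 - f1 then s (f0 - f1 + k) else r1 (f0 - f1 + k - (f0 - f1))) = 0"
        using c lt by blast
      then show ?thesis by simp
    next
      case False then show ?thesis using assms(2) by (simp add: words_def)
    qed
  qed
  ultimately show ?thesis using r2 by simp
qed

lemma E_inj: assumes "s \<in> S" "r1 \<in> words f1" "r2 \<in> words e" "s' \<in> S" "r1' \<in> words f1" "r2' \<in> words e"
  and "E s r1 r2 = E s' r1' r2'" shows "s = s' \<and> r1 = r1' \<and> r2 = r2'"
proof -
  have "E (s - s') (r1 - r1') (r2 - r2') = 0" using assms(7) by (simp add: E_diff)
  then have "s - s' = 0 \<and> r1 - r1' = 0 \<and> r2 - r2' = 0"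
    using E_zero assms words_diff by blast
  then show ?thesis by simp
qed

lemma W_add: assumes "w \<in> W s" "w' \<in> W s'" shows "w + w' \<in> W (s + s')"
proof -
  obtain a b a' b' where "w = E s a b" "w' = E s' a' b'" "a \<in> words f1" "b \<in> words e"
    "a' \<in> words f1" "b' \<in> words e" using assms unfolding W_def by blast
  then show ?thesis unfolding W_def
    by (intro CollectI exI[of _ "a + a'"] exI[of _ "b + b'"]) (simp add: E_add words_add)
qed

lemma W_diff: assumes "w \<in> W s" "w' \<in> W s'" shows "w - w' \<in> W (s - s')"
proof -
  obtain a b a' b' where "w = E s a b" "w' = E s' a' b'" "a \<in> words f1" "b \<in> words e"
    "a' \<in> words f1" "b' \<in> words e" using assms unfolding W_def by blast
  then show ?thesis unfolding W_def
    by (intro CollectI exI[of _ "a - a'"] exI[of _ "b - b'"]) (simp add: E_diff words_diff)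
qed

lemma W_words: "w \<in> W s \<Longrightarrow> w \<in> words NN"
  unfolding W_def using E_words by blast

lemma W_disj: "s \<in> S \<Longrightarrow> s' \<in> S \<Longrightarrow> w \<in> W s \<Longrightarrow> w \<in> W s' \<Longrightarrow> s = s'"
  unfolding W_def using E_inj by blast

lemma W_eq: "W s = (\<lambda>(r1,r2). E s r1 r2) ` (words f1 \<times> words e)"
  unfolding W_def by auto

lemma card_W: assumes "s \<in> S" shows "card (W s) = card (UNIV::'a set) ^ (f1 + e)"
proof -
  have inj: "inj_on (\<lambda>(r1,r2). E s r1 r2) (words f1 \<times> words e)"
    using E_inj assms by (auto simp: inj_on_def)
  have "card (W s) = card ((words f1 :: (nat \<Rightarrow> 'a) set) \<times> (words e :: (nat \<Rightarrow> 'a) set))"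
    using card_image[OF inj] W_eq[of s] by simp
  then show ?thesis by (simp add: card_cartesian_product card_words power_add)
qed

lemma finite_W: "finite (W s)"
  unfolding W_eq by simp

lemma enc_eq: assumes "s \<in> S"
  shows "ecss_enc n f0 f1 e gQ gF1 GE s w = (if w \<in> W s then cst TYPE('a) (f1 + e) else 0)"
proof -
  have j: "join_word n (ecss_cw f0 f1 e gQ gF1 GE s r1 r2) r2 = E s r1 r2" for r1 r2
    by (simp add: E_def cw_def)
  have "(\<Sum>r1\<in>words f1. \<Sum>r2\<in>words e. if w = E s r1 r2 then 1 else 0)
      = (\<Sum>(r1,r2)\<in>words f1 \<times> words e. if w = E s r1 r2 then 1 else (0::complex))"
    by (rule sum.cartesian_product)
  also have "\<dots> = (\<Sum>p\<in>words f1 \<times> words e. if w = E s (fst p) (snd p) then 1 else (0::complex))"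
    by (intro sum.cong refl) auto
  also have "\<dots> = (if w \<in> W s then 1 else 0)"
  proof (cases "w \<in> W s")
    case True
    then obtain a b where ab: "a \<in> words f1" "b \<in> words e" "w = E s a b" unfolding W_def by blast
    have "(\<Sum>p\<in>words f1 \<times> words e. if w = E s (fst p) (snd p) then 1 else (0::complex))
        = (\<Sum>p\<in>words f1 \<times> words e. if p = (a,b) then 1 else 0)"
    proof (rule sum.cong[OF refl])
      fix p :: "(nat \<Rightarrow> 'a) \<times> (nat \<Rightarrow> 'a)" assume p: "p \<in> words f1 \<times> words e"
      have "w = E s (fst p) (snd p) \<longleftrightarrow> p = (a,b)"
      proof
        assume "w = E s (fst p) (snd p)"
        then have "E s (fst p) (snd p) = E s a b" using ab(3) by simp
        then have "fst p = a \<and> snd p = b" using E_inj[OF assms(1) _ _ assms(1) ab(1,2)] p by auto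
        then show "p = (a,b)" by (simp add: prod_eq_iff)
      qed (simp add: ab(3))
      then show "(if w = E s (fst p) (snd p) then 1 else (0::complex)) = (if p = (a,b) then 1 else 0)" by simp
    qed
    also have "\<dots> = 1" using ab by (simp add: sum.delta')
    finally show ?thesis using True by simp
  next
    case False
    then have "\<forall>p\<in>words f1 \<times> words e. w \<noteq> E s (fst p) (snd p)" unfolding W_def by auto
    then have "(\<Sum>p\<in>words f1 \<times> words e. if w = E s (fst p) (snd p) then 1 else (0::complex)) = 0"
      by (intro sum.neutral) auto
    then show ?thesis using False by simp
  qed
  finally show ?thesis unfolding ecss_enc_def j cst_def by simp
qed

lemma rho_eq: "ecss_rho n f0 f1 e gQ gF1 GE \<rho> w w' =
   (\<Sum>s\<in>S. \<Sum>s'\<in>S. \<rho> s s' * (if w \<in> W s then cst TYPE('a) (f1 + e) else 0) * (if w' \<in> W s' then cst TYPE('a) (f1 + e) else 0))"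
  unfolding ecss_rho_def by (intro sum.cong refl) (simp add: enc_eq cst_cnj)


definition Aw where "Aw A = (words_on NN A :: (nat \<Rightarrow> 'a) set)"
definition Bw where "Bw A = (words_on NN ({..<NN} - A) :: (nat \<Rightarrow> 'a) set)"
definition DD where "DD A = piA A ` W 0"

lemma Aw_iff: "x \<in> Aw A \<longleftrightarrow> x \<in> words NN \<and> (\<forall>i. i \<notin> A \<longrightarrow> x i = 0)"
  unfolding Aw_def words_on_def by simp
lemma Bw_iff: "z \<in> Bw A \<longleftrightarrow> z \<in> words NN \<and> (\<forall>i\<in>A. z i = 0)"
  unfolding Bw_def words_on_def words_def by auto
lemma finite_Aw[simp]: "finite (Aw A)" unfolding Aw_def by simp
lemma finite_Bw[simp]: "finite (Bw A)" unfolding Bw_def by simp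

lemma D_Aw: "t \<in> DD A \<Longrightarrow> t \<in> Aw A"
  unfolding DD_def Aw_iff piA_def using W_words by (auto simp: words_def)

lemma D_diff: assumes "t \<in> DD A" "t' \<in> DD A" shows "t - t' \<in> DD A"
proof -
  obtain c c' where "c \<in> W 0" "c' \<in> W 0" "t = piA A c" "t' = piA A c'" using assms unfolding DD_def by blast
  moreover have "c - c' \<in> W (0 - 0)" using calculation W_diff by blast
  moreover have "piA A c - piA A c' = piA A (c - c')" unfolding piA_def by (simp add: fun_eq_iff)
  ultimately show ?thesis unfolding DD_def by simp
qed

lemma finite_DD[simp]: "finite (DD A)"
  unfolding DD_def by (simp add: finite_W)

lemma D_Aw_sub: "DD A \<subseteq> Aw A" using D_Aw by blast

lemma count_lemma:
  "(\<Sum>t\<in>DD A. \<Sum>z\<in>Bw A. if t + z \<in> W 0 then 1 else (0::complex)) = of_nat (card (W 0))"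
proof -
  let ?P = "{p \<in> DD A \<times> Bw A. fst p + snd p \<in> W 0}"
  have "(\<Sum>t\<in>DD A. \<Sum>z\<in>Bw A. if t + z \<in> W 0 then 1 else (0::complex))
      = (\<Sum>(t,z)\<in>DD A \<times> Bw A. if t + z \<in> W 0 then 1 else (0::complex))"
    by (rule sum.cartesian_product)
  also have "\<dots> = (\<Sum>p\<in>DD A \<times> Bw A. if fst p + snd p \<in> W 0 then 1 else (0::complex))"
    by (intro sum.cong refl) auto
  also have "\<dots> = (\<Sum>p\<in>?P. 1)"
    by (rule sum.inter_filter[symmetric]) simp
  also have "\<dots> = of_nat (card ?P)" by simp
  also have "card ?P = card (W 0)"
  proof -
    have "bij_betw (\<lambda>c. (piA A c, piB A c)) (W 0) ?P"
    proof (rule bij_betw_byWitness[where f'="\<lambda>p. fst p + snd p"])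
      show "\<forall>c\<in>W 0. fst (piA A c, piB A c) + snd (piA A c, piB A c) = c"
        by (auto simp: piA_def piB_def fun_eq_iff)
      show "\<forall>p\<in>?P. (piA A (fst p + snd p), piB A (fst p + snd p)) = p"
      proof
        fix p assume p: "p \<in> ?P"
        then have "fst p \<in> Aw A" "snd p \<in> Bw A" using D_Aw by auto
        then show "(piA A (fst p + snd p), piB A (fst p + snd p)) = p"
          unfolding Aw_iff Bw_iff by (auto simp: piA_def piB_def fun_eq_iff prod_eq_iff)
      qed
      show "(\<lambda>c. (piA A c, piB A c)) ` W 0 \<subseteq> ?P"
      proof
        fix q assume "q \<in> (\<lambda>c. (piA A c, piB A c)) ` W 0"
        then obtain c where c: "c \<in> W 0" "q = (piA A c, piB A c)" by blast
        have "piA A c + piB A c = c" by (auto simp: piA_def piB_def fun_eq_iff)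
        moreover have "piB A c \<in> Bw A" using W_words[OF c(1)] unfolding Bw_iff piB_def words_def by auto
        moreover have "piA A c \<in> DD A" unfolding DD_def using c(1) by blast
        ultimately show "q \<in> ?P" using c by simp
      qed
      show "(\<lambda>p. fst p + snd p) ` ?P \<subseteq> W 0" by auto
    qed
    then show ?thesis by (rule bij_betw_same_card[symmetric])
  qed
  finally show ?thesis .
qed

end


locale ecss_good = ecss n f0 f1 e gQ gF1 GE
  for n f0 f1 e :: nat and gQ gF1 GE :: "nat \<Rightarrow> nat \<Rightarrow> 'a::{finite,field}" +
  fixes A :: "nat set" and \<sigma> :: "(nat \<Rightarrow> 'a) \<Rightarrow> (nat \<Rightarrow> 'a)"
  assumes Xc: "\<And>s w. s \<in> S \<Longrightarrow> w \<in> W s \<Longrightarrow> (\<forall>i\<in>A. w i = 0) \<Longrightarrow> s = 0"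
    and sig: "\<And>s. s \<in> S \<Longrightarrow> \<sigma> s \<in> W s \<and> \<sigma> s \<in> Aw A"
begin

definition RR where "RR = {\<sigma> s + t | s t. s \<in> S \<and> t \<in> DD A}"

definition Kr where "Kr t s x = (if t \<in> DD A then (if x = \<sigma> s + t then 1 else 0)
   else if t \<notin> RR \<and> x = t \<and> s = 0 then 1 else (0::complex))"

lemma U: assumes s: "s \<in> S" "s' \<in> S" and t: "t \<in> DD A" "t' \<in> DD A" and eq: "\<sigma> s + t = \<sigma> s' + t'"
  shows "s = s'"
proof -
  have "t' - t \<in> DD A" by (rule D_diff[OF t(2) t(1)])
  then obtain c where c: "c \<in> W 0" "piA A c = t' - t" unfolding DD_def by (rule imageE) simp
  have "\<sigma> s \<in> W s" "\<sigma> s' \<in> W s'" using sig[OF s(1)] sig[OF s(2)] by simp_all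
  then have "\<sigma> s - \<sigma> s' \<in> W (s - s')" by (rule W_diff)
  then have w: "\<sigma> s - \<sigma> s' - c \<in> W (s - s' - 0)" using c(1) by (rule W_diff)
  have "\<forall>i\<in>A. (\<sigma> s - \<sigma> s' - c) i = 0"
  proof
    fix i assume i: "i \<in> A"
    have ci: "c i = t' i - t i" using fun_cong[OF c(2), of i] i by (simp add: piA_def)
    have ei: "\<sigma> s i + t i = \<sigma> s' i + t' i" using fun_cong[OF eq, of i] by simp
    have "(\<sigma> s - \<sigma> s' - c) i = \<sigma> s i - \<sigma> s' i - (t' i - t i)" using ci by simp
    also have "\<dots> = (\<sigma> s i + t i) - (\<sigma> s' i + t' i)" by (simp add: algebra_simps)
    also have "\<dots> = 0" using ei by simp
    finally show "(\<sigma> s - \<sigma> s' - c) i = 0" .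
  qed
  moreover have sS: "s - s' - 0 \<in> S" using words_diff[OF words_diff[OF s] words_zero] .
  ultimately have "s - s' - 0 = 0" using Xc[OF sS w] by blast
  then show ?thesis by simp
qed

lemma sig0_D: "\<sigma> 0 \<in> DD A"
proof -
  have "\<sigma> 0 \<in> W 0" "\<sigma> 0 \<in> Aw A" using sig[of 0] by auto
  moreover then have "piA A (\<sigma> 0) = \<sigma> 0" unfolding Aw_iff piA_def by auto
  ultimately show ?thesis unfolding DD_def by (metis image_eqI)
qed

lemma D_R: assumes "t \<in> DD A" shows "t \<in> RR"
proof -
  have "t - \<sigma> 0 \<in> DD A" by (rule D_diff[OF assms sig0_D])
  moreover have "t = \<sigma> 0 + (t - \<sigma> 0)" by simp
  ultimately show ?thesis unfolding RR_def using words_zero by blast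
qed

lemma R_Aw: assumes "x \<in> RR" shows "x \<in> Aw A"
proof -
  obtain s t where "s \<in> S" "t \<in> DD A" "x = \<sigma> s + t" using assms unfolding RR_def by blast
  then have "\<sigma> s \<in> Aw A" "t \<in> Aw A" "x = \<sigma> s + t" using sig D_Aw by auto
  then show ?thesis unfolding Aw_def using words_on_add by blast
qed

lemma M: assumes s: "s \<in> S" "s0 \<in> S" and t: "t \<in> DD A" and z: "z \<in> Bw A"
  shows "\<sigma> s0 + t + z \<in> W s \<longleftrightarrow> s = s0 \<and> t + z \<in> W 0"
proof
  assume h: "\<sigma> s0 + t + z \<in> W s"
  obtain c where c: "c \<in> W 0" "piA A c = t" using t unfolding DD_def by blast
  have "\<sigma> s0 \<in> W s0" using sig s by auto
  have w: "\<sigma> s0 + t + z - \<sigma> s0 - c \<in> W (s - s0 - 0)"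
    by (rule W_diff[OF W_diff[OF h \<open>\<sigma> s0 \<in> W s0\<close>] c(1)])
  have "\<forall>i\<in>A. (\<sigma> s0 + t + z - \<sigma> s0 - c) i = 0"
  proof
    fix i assume i: "i \<in> A"
    have "t i = c i" using fun_cong[OF c(2), of i] i by (simp add: piA_def)
    moreover have "z i = 0" using z i unfolding Bw_iff by blast
    ultimately show "(\<sigma> s0 + t + z - \<sigma> s0 - c) i = 0" by simp
  qed
  moreover have sS: "s - s0 - 0 \<in> S" using words_diff[OF words_diff[OF s] words_zero] .
  ultimately have "s - s0 - 0 = 0" using Xc[OF sS w] by blast
  then have ss: "s = s0" by simp
  have "\<sigma> s0 + t + z - \<sigma> s0 \<in> W (s - s0)" by (rule W_diff[OF h \<open>\<sigma> s0 \<in> W s0\<close>])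
  then have "t + z \<in> W 0" using ss by (simp add: add.assoc)
  then show "s = s0 \<and> t + z \<in> W 0" using ss by simp
next
  assume "s = s0 \<and> t + z \<in> W 0"
  moreover have "\<sigma> s0 \<in> W s0" using sig s by auto
  ultimately have "\<sigma> s0 + (t + z) \<in> W (s0 + 0)" using W_add by blast
  then show "\<sigma> s0 + t + z \<in> W s" using \<open>s = s0 \<and> t + z \<in> W 0\<close> by (simp add: add.assoc)
qed

lemma notR: assumes t: "t \<in> Aw A" "t \<notin> RR" and z: "z \<in> Bw A" and s: "s \<in> S"
  shows "t + z \<notin> W s"
proof
  assume h: "t + z \<in> W s"
  have sg: "\<sigma> s \<in> W s" "\<sigma> s \<in> Aw A" using sig s by auto
  have "t + z - \<sigma> s \<in> W (s - s)" using W_diff[OF h sg(1)] .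
  then have c: "t + z - \<sigma> s \<in> W 0" by simp
  have "piA A (t + z - \<sigma> s) = t - \<sigma> s"
    using t(1) z sg(2) unfolding Aw_iff Bw_iff piA_def by (auto simp: fun_eq_iff)
  then have "t - \<sigma> s \<in> DD A" using c unfolding DD_def by (metis image_eqI)
  then have "\<sigma> s + (t - \<sigma> s) \<in> RR" unfolding RR_def using s by blast
  then show False using t(2) by simp
qed

lemma Kr_cnj: "cnj (Kr t s x) = Kr t s x"
  unfolding Kr_def by simp

lemma Kr_D: "t \<in> DD A \<Longrightarrow> Kr t s x = (if x = \<sigma> s + t then 1 else 0)"
  unfolding Kr_def by simp
lemma Kr_nD: "t \<notin> DD A \<Longrightarrow> Kr t s x = (if t \<notin> RR \<and> x = t \<and> s = 0 then 1 else 0)"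
  unfolding Kr_def by simp

lemma Kr_inner:
  assumes x: "x \<in> Aw A" and y: "y \<in> Aw A"
  shows "(\<Sum>s\<in>S. Kr t s x * Kr t s y) =
    (if t \<in> DD A then (if x = y \<and> (\<exists>s\<in>S. x = \<sigma> s + t) then 1 else 0)
     else (if t \<notin> RR \<and> x = t \<and> y = t then 1 else 0))"
proof (cases "t \<in> DD A")
  case True
  show ?thesis
  proof (cases "\<exists>s\<in>S. x = \<sigma> s + t")
    case ex: True
    then obtain s1 where s1: "s1 \<in> S" "x = \<sigma> s1 + t" by blast
    have "(\<Sum>s\<in>S. Kr t s x * Kr t s y) = (\<Sum>s\<in>S. if s = s1 then (if y = x then 1 else 0) else 0)"
    proof (rule sum.cong[OF refl])
      fix s assume s: "s \<in> S"
      show "Kr t s x * Kr t s y = (if s = s1 then (if y = x then 1 else 0) else 0)"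
      proof (cases "s = s1")
        case True
        then show ?thesis unfolding Kr_D[OF \<open>t \<in> DD A\<close>] using s1(2) by simp
      next
        case False
        have "x \<noteq> \<sigma> s + t"
        proof
          assume "x = \<sigma> s + t"
          then have "\<sigma> s + t = \<sigma> s1 + t" using s1(2) by simp
          then have "s = s1" by (rule U[OF s s1(1) \<open>t \<in> DD A\<close> \<open>t \<in> DD A\<close>])
          then show False using False by simp
        qed
        then show ?thesis unfolding Kr_D[OF \<open>t \<in> DD A\<close>] using False by simp
      qed
    qed
    also have "\<dots> = (if y = x then 1 else 0)" using s1(1) by simp
    finally show ?thesis using True ex by auto
  next
    case nex: False
    have "(\<Sum>s\<in>S. Kr t s x * Kr t s y) = (\<Sum>s\<in>S. 0)"
    proof (rule sum.cong[OF refl])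
      fix s assume "s \<in> S"
      then have "x \<noteq> \<sigma> s + t" using nex by blast
      then show "Kr t s x * Kr t s y = 0" unfolding Kr_D[OF True] by simp
    qed
    then show ?thesis using True nex by simp
  qed
next
  case False
  have "(\<Sum>s\<in>S. Kr t s x * Kr t s y) = (\<Sum>s\<in>S. if s = 0 then (if t \<notin> RR \<and> x = t \<and> y = t then 1 else 0) else 0)"
  proof (rule sum.cong[OF refl])
    fix s assume "s \<in> S"
    show "Kr t s x * Kr t s y = (if s = 0 then (if t \<notin> RR \<and> x = t \<and> y = t then 1 else 0) else 0)"
      unfolding Kr_nD[OF False] by simp
  qed
  also have "\<dots> = (if t \<notin> RR \<and> x = t \<and> y = t then 1 else 0)" by simp
  finally show ?thesis using False by simp
qed

lemma Kr_complete:
  assumes x: "x \<in> Aw A" and y: "y \<in> Aw A"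
  shows "(\<Sum>t\<in>Aw A. \<Sum>s\<in>S. cnj (Kr t s x) * Kr t s y) = (if x = y then 1 else 0)"
proof -
  have "(\<Sum>t\<in>Aw A. \<Sum>s\<in>S. cnj (Kr t s x) * Kr t s y) = (\<Sum>t\<in>Aw A. \<Sum>s\<in>S. Kr t s x * Kr t s y)"
    by (simp add: Kr_cnj)
  also have "\<dots> = (\<Sum>t\<in>Aw A. (if t \<in> DD A then (if x = y \<and> (\<exists>s\<in>S. x = \<sigma> s + t) then 1 else 0)
     else (if t \<notin> RR \<and> x = t \<and> y = t then 1 else 0)))"
    using Kr_inner[OF x y] by simp
  also have "\<dots> = (if x = y then 1 else 0)"
  proof (cases "x = y")
    case False then show ?thesis by (intro trans[OF sum.neutral]) auto
  next
    case True
    show ?thesis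
    proof (cases "x \<in> RR")
      case xR: True
      then obtain s1 t1 where st: "s1 \<in> S" "t1 \<in> DD A" "x = \<sigma> s1 + t1" unfolding RR_def by blast
      have "(\<Sum>t\<in>Aw A. (if t \<in> DD A then (if x = y \<and> (\<exists>s\<in>S. x = \<sigma> s + t) then 1 else 0)
           else (if t \<notin> RR \<and> x = t \<and> y = t then 1 else 0))) = (\<Sum>t\<in>Aw A. if t = t1 then 1 else (0::complex))"
      proof (rule sum.cong[OF refl])
        fix t assume t: "t \<in> Aw A"
        have "t \<in> DD A \<Longrightarrow> (\<exists>s\<in>S. x = \<sigma> s + t) \<longleftrightarrow> t = t1"
        proof
          assume tD: "t \<in> DD A" and "\<exists>s\<in>S. x = \<sigma> s + t"
          then obtain s where s: "s \<in> S" "x = \<sigma> s + t" by blast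
          then have "s = s1" using U[OF s(1) st(1) tD st(2)] st(3) by simp
          then show "t = t1" using s st by simp
        qed (use st in auto)
        then show "(if t \<in> DD A then (if x = y \<and> (\<exists>s\<in>S. x = \<sigma> s + t) then 1 else 0)
           else (if t \<notin> RR \<and> x = t \<and> y = t then 1 else 0)) = (if t = t1 then 1 else (0::complex))"
          using True xR st(2) by auto
      qed
      also have "\<dots> = 1" using st(2) D_Aw by simp
      finally show ?thesis using True by simp
    next
      case xR: False
      have "(\<Sum>t\<in>Aw A. (if t \<in> DD A then (if x = y \<and> (\<exists>s\<in>S. x = \<sigma> s + t) then 1 else 0)
           else (if t \<notin> RR \<and> x = t \<and> y = t then 1 else 0))) = (\<Sum>t\<in>Aw A. if t = x then 1 else (0::complex))"
      proof (rule sum.cong[OF refl])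
        fix t assume t: "t \<in> Aw A"
        have "\<not> (\<exists>s\<in>S. x = \<sigma> s + t)" if "t \<in> DD A" using xR that unfolding RR_def by blast
        moreover have "t \<in> DD A \<Longrightarrow> t \<noteq> x" using D_R xR by blast
        ultimately show "(if t \<in> DD A then (if x = y \<and> (\<exists>s\<in>S. x = \<sigma> s + t) then 1 else 0)
           else (if t \<notin> RR \<and> x = t \<and> y = t then 1 else 0)) = (if t = x then 1 else (0::complex))"
          using True xR by auto
      qed
      also have "\<dots> = 1" using x by simp
      finally show ?thesis using True by simp
    qed
  qed
  finally show ?thesis .
qed


lemma PT_zero: assumes t: "t \<in> Aw A" "t \<notin> RR"
  shows "partial_trace NN A (ecss_rho n f0 f1 e gQ gF1 GE \<rho>) t t = 0"
proof -
  have "partial_trace NN A (ecss_rho n f0 f1 e gQ gF1 GE \<rho>) t t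
      = (\<Sum>z\<in>Bw A. ecss_rho n f0 f1 e gQ gF1 GE \<rho> (t + z) (t + z))"
    unfolding PT_eq Bw_def ..
  also have "\<dots> = (\<Sum>z\<in>Bw A. 0)"
  proof (rule sum.cong[OF refl])
    fix z assume z: "z \<in> Bw A"
    show "ecss_rho n f0 f1 e gQ gF1 GE \<rho> (t + z) (t + z) = 0"
      unfolding rho_eq using notR[OF t z] by (intro sum.neutral ballI) simp
  qed
  finally show ?thesis by simp
qed

lemma PT_D: assumes s: "s0 \<in> S" "s0' \<in> S" and t: "t \<in> DD A"
  shows "partial_trace NN A (ecss_rho n f0 f1 e gQ gF1 GE \<rho>) (\<sigma> s0 + t) (\<sigma> s0' + t)
     = (\<Sum>z\<in>Bw A. \<rho> s0 s0' * (if t + z \<in> W 0 then cst TYPE('a) (f1 + e) * cst TYPE('a) (f1 + e) else 0))"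
proof -
  have "partial_trace NN A (ecss_rho n f0 f1 e gQ gF1 GE \<rho>) (\<sigma> s0 + t) (\<sigma> s0' + t)
      = (\<Sum>z\<in>Bw A. ecss_rho n f0 f1 e gQ gF1 GE \<rho> (\<sigma> s0 + t + z) (\<sigma> s0' + t + z))"
    unfolding PT_eq Bw_def ..
  also have "\<dots> = (\<Sum>z\<in>Bw A. \<rho> s0 s0' * (if t + z \<in> W 0 then cst TYPE('a) (f1 + e) * cst TYPE('a) (f1 + e) else 0))"
  proof (rule sum.cong[OF refl])
    fix z assume z: "z \<in> Bw A"
    let ?K = "\<rho> s0 s0' * (if t + z \<in> W 0 then cst TYPE('a) (f1 + e) * cst TYPE('a) (f1 + e) else 0)"
    have "ecss_rho n f0 f1 e gQ gF1 GE \<rho> (\<sigma> s0 + t + z) (\<sigma> s0' + t + z)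
        = (\<Sum>s\<in>S. \<Sum>s'\<in>S. if s = s0 \<and> s' = s0' then ?K else 0)"
      unfolding rho_eq
    proof (intro sum.cong refl)
      fix s s' assume ss: "s \<in> S" "s' \<in> S"
      have m1: "\<sigma> s0 + t + z \<in> W s \<longleftrightarrow> s = s0 \<and> t + z \<in> W 0" by (rule M[OF ss(1) s(1) t z])
      have m2: "\<sigma> s0' + t + z \<in> W s' \<longleftrightarrow> s' = s0' \<and> t + z \<in> W 0" by (rule M[OF ss(2) s(2) t z])
      show "\<rho> s s' * (if \<sigma> s0 + t + z \<in> W s then cst TYPE('a) (f1 + e) else 0) *
            (if \<sigma> s0' + t + z \<in> W s' then cst TYPE('a) (f1 + e) else 0) = (if s = s0 \<and> s' = s0' then ?K else 0)"
        unfolding m1 m2 by auto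
    qed
    also have "\<dots> = ?K" by (rule sum2_delta[OF finite_words finite_words s])
    finally show "ecss_rho n f0 f1 e gQ gF1 GE \<rho> (\<sigma> s0 + t + z) (\<sigma> s0' + t + z) = ?K" .
  qed
  finally show ?thesis .
qed

lemma recov: assumes s: "s0 \<in> S" "s0' \<in> S"
  shows "(\<Sum>t\<in>Aw A. \<Sum>x\<in>Aw A. \<Sum>y\<in>Aw A.
     Kr t s0 x * partial_trace NN A (ecss_rho n f0 f1 e gQ gF1 GE \<rho>) x y * cnj (Kr t s0' y)) = \<rho> s0 s0'"
proof -
  let ?PT = "partial_trace NN A (ecss_rho n f0 f1 e gQ gF1 GE \<rho>)"
  let ?c = "cst TYPE('a) (f1 + e)"
  have "(\<Sum>t\<in>Aw A. \<Sum>x\<in>Aw A. \<Sum>y\<in>Aw A. Kr t s0 x * ?PT x y * cnj (Kr t s0' y))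
      = (\<Sum>t\<in>Aw A. if t \<in> DD A then ?PT (\<sigma> s0 + t) (\<sigma> s0' + t) else 0)"
  proof (rule sum.cong[OF refl])
    fix t assume t: "t \<in> Aw A"
    show "(\<Sum>x\<in>Aw A. \<Sum>y\<in>Aw A. Kr t s0 x * ?PT x y * cnj (Kr t s0' y))
       = (if t \<in> DD A then ?PT (\<sigma> s0 + t) (\<sigma> s0' + t) else 0)"
    proof (cases "t \<in> DD A")
      case True
      have a: "\<sigma> s0 + t \<in> Aw A" "\<sigma> s0' + t \<in> Aw A"
        using sig s D_Aw[OF True] unfolding Aw_def by (auto intro: words_on_add)
      have "(\<Sum>x\<in>Aw A. \<Sum>y\<in>Aw A. Kr t s0 x * ?PT x y * cnj (Kr t s0' y))
          = (\<Sum>x\<in>Aw A. \<Sum>y\<in>Aw A. (if x = \<sigma> s0 + t then 1 else 0) * ?PT x y * (if y = \<sigma> s0' + t then 1 else 0))"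
        unfolding Kr_cnj unfolding Kr_D[OF True] ..
      also have "\<dots> = ?PT (\<sigma> s0 + t) (\<sigma> s0' + t)"
        by (rule sum2_delta_mult[OF finite_Aw finite_Aw a])
      finally show ?thesis using True by simp
    next
      case False
      have "(\<Sum>x\<in>Aw A. \<Sum>y\<in>Aw A. Kr t s0 x * ?PT x y * cnj (Kr t s0' y)) = (\<Sum>x\<in>Aw A. \<Sum>y\<in>Aw A. 0)"
      proof (intro sum.cong refl)
        fix x y
        show "Kr t s0 x * ?PT x y * cnj (Kr t s0' y) = 0"
        proof (cases "t \<notin> RR \<and> x = t \<and> y = t")
          case True
          then have "?PT x y = 0" using PT_zero[OF t] by simp
          then show ?thesis by simp
        next
          case F2: False
          then have "Kr t s0 x = 0 \<or> Kr t s0' y = 0" unfolding Kr_nD[OF False] by auto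
          then show ?thesis by auto
        qed
      qed
      then show ?thesis using False by simp
    qed
  qed
  also have "\<dots> = (\<Sum>t\<in>Aw A \<inter> DD A. ?PT (\<sigma> s0 + t) (\<sigma> s0' + t))"
    by (rule sum.inter_restrict[symmetric]) simp
  also have "Aw A \<inter> DD A = DD A" using D_Aw by blast
  also have "(\<Sum>t\<in>DD A. ?PT (\<sigma> s0 + t) (\<sigma> s0' + t))
      = (\<Sum>t\<in>DD A. \<Sum>z\<in>Bw A. \<rho> s0 s0' * (if t + z \<in> W 0 then ?c * ?c else 0))"
    by (rule sum.cong[OF refl]) (rule PT_D[OF s])
  also have "\<dots> = (\<Sum>t\<in>DD A. \<Sum>z\<in>Bw A. (\<rho> s0 s0' * (?c * ?c)) * (if t + z \<in> W 0 then 1 else 0))"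
    by (intro sum.cong refl) simp
  also have "\<dots> = (\<rho> s0 s0' * (?c * ?c)) * (\<Sum>t\<in>DD A. \<Sum>z\<in>Bw A. if t + z \<in> W 0 then 1 else 0)"
    by (simp add: sum_distrib_left)
  also have "\<dots> = \<rho> s0 s0' * (?c * ?c * of_nat (card (UNIV::'a set) ^ (f1 + e)))"
    unfolding count_lemma card_W[OF words_zero] by (simp add: mult.assoc)
  also have "?c * ?c * of_nat (card (UNIV::'a set) ^ (f1 + e)) = 1" by (rule cst_sq)
  also have "\<rho> s0 s0' * 1 = \<rho> s0 s0'" by simp
  finally show ?thesis .
qed

end

context ecss
begin

lemma G1:
  assumes X: "\<And>s w. s \<in> S \<Longrightarrow> w \<in> W s \<Longrightarrow> (\<forall>i\<in>A. w i = 0) \<Longrightarrow> s = 0"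
    and Z: "\<And>s. s \<in> S \<Longrightarrow> \<exists>w\<in>W s. w \<in> Aw A"
  shows "ecss_authorized n f0 f1 e gQ gF1 GE A"
proof -
  obtain \<sigma> where \<sigma>: "\<forall>s\<in>S. \<sigma> s \<in> W s \<and> \<sigma> s \<in> Aw A" using Z by metis
  interpret g: ecss_good n f0 f1 e gQ gF1 GE A \<sigma>
    by unfold_locales (use X \<sigma> in auto)
  obtain h where h: "bij_betw h {..<card (Aw A)} (Aw A)"
    using ex_bij_betw_nat_finite[OF finite_Aw[of A]] by (auto simp: atLeast0LessThan)
  show ?thesis unfolding ecss_authorized_def
  proof (intro exI[of _ "card (Aw A)"] exI[of _ "\<lambda>i. g.Kr (h i)"] conjI allI impI ballI)
    fix x y :: "nat \<Rightarrow> 'a" assume x: "x \<in> words_on NN A" and y: "y \<in> words_on NN A"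
    then have xy: "x \<in> Aw A" "y \<in> Aw A" unfolding Aw_def .
    have "(\<Sum>i<card (Aw A). \<Sum>s\<in>S. cnj (g.Kr (h i) s x) * g.Kr (h i) s y)
        = (\<Sum>t\<in>Aw A. \<Sum>s\<in>S. cnj (g.Kr t s x) * g.Kr t s y)"
      by (rule sum.reindex_bij_betw[OF h])
    also have "\<dots> = (if x = y then 1 else 0)" by (rule g.Kr_complete[OF xy])
    finally show "(\<Sum>i<card (Aw A). \<Sum>s\<in>S. cnj (g.Kr (h i) s x) * g.Kr (h i) s y) = (if x = y then 1 else 0)" .
  next
    fix \<rho> s s' assume s: "s \<in> S" "s' \<in> S"
    have "(\<Sum>i<card (Aw A). \<Sum>x\<in>words_on NN A. \<Sum>y\<in>words_on NN A.
             g.Kr (h i) s x * partial_trace NN A (ecss_rho n f0 f1 e gQ gF1 GE \<rho>) x y * cnj (g.Kr (h i) s' y))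
       = (\<Sum>t\<in>Aw A. \<Sum>x\<in>Aw A. \<Sum>y\<in>Aw A.
             g.Kr t s x * partial_trace NN A (ecss_rho n f0 f1 e gQ gF1 GE \<rho>) x y * cnj (g.Kr t s' y))"
      unfolding Aw_def by (rule sum.reindex_bij_betw[OF h[unfolded Aw_def]])
    also have "\<dots> = \<rho> s s'" by (rule g.recov[OF s])
    finally show "(\<Sum>i<card (Aw A). \<Sum>x\<in>words_on NN A. \<Sum>y\<in>words_on NN A.
             g.Kr (h i) s x * partial_trace NN A (ecss_rho n f0 f1 e gQ gF1 GE \<rho>) x y * cnj (g.Kr (h i) s' y)) = \<rho> s s'" .
  qed
qed

end


context ecss
begin

lemma not_auth_gen:
  assumes auth: "ecss_authorized n f0 f1 e gQ gF1 GE A"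
    and d1: "is_density (f0 - f1) \<rho>1" and d2: "is_density (f0 - f1) \<rho>2"
    and eqPT: "\<And>x y. x \<in> Aw A \<Longrightarrow> y \<in> Aw A \<Longrightarrow>
       partial_trace NN A (ecss_rho n f0 f1 e gQ gF1 GE \<rho>1) x y = partial_trace NN A (ecss_rho n f0 f1 e gQ gF1 GE \<rho>2) x y"
    and s: "s \<in> S" "s' \<in> S"
  shows "\<rho>1 s s' = \<rho>2 s s'"
proof -
  obtain m and K :: "nat \<Rightarrow> (nat \<Rightarrow> 'a) \<Rightarrow> (nat \<Rightarrow> 'a) \<Rightarrow> complex" where K: "\<forall>\<rho>. is_density (f0 - f1) \<rho> \<longrightarrow>
          (\<forall>s\<in>S. \<forall>s'\<in>S.
             (\<Sum>i<m. \<Sum>x\<in>words_on NN A. \<Sum>y\<in>words_on NN A.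
                K i s x * partial_trace NN A (ecss_rho n f0 f1 e gQ gF1 GE \<rho>) x y * cnj (K i s' y))
             = \<rho> s s')"
    using auth unfolding ecss_authorized_def by blast
  have "\<rho>1 s s' = (\<Sum>i<m. \<Sum>x\<in>words_on NN A. \<Sum>y\<in>words_on NN A.
                K i s x * partial_trace NN A (ecss_rho n f0 f1 e gQ gF1 GE \<rho>1) x y * cnj (K i s' y))"
    using K d1 s by simp
  also have "\<dots> = (\<Sum>i<m. \<Sum>x\<in>words_on NN A. \<Sum>y\<in>words_on NN A.
                K i s x * partial_trace NN A (ecss_rho n f0 f1 e gQ gF1 GE \<rho>2) x y * cnj (K i s' y))"
    using eqPT unfolding Aw_def by (intro sum.cong refl) simp
  also have "\<dots> = \<rho>2 s s'" using K d2 s by simp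
  finally show ?thesis .
qed

lemma rho_delta: assumes a: "a \<in> S"
  shows "ecss_rho n f0 f1 e gQ gF1 GE (\<lambda>s s'. if s = a \<and> s' = a then 1 else 0) w w'
    = (if w \<in> W a then cst TYPE('a) (f1 + e) else 0) * (if w' \<in> W a then cst TYPE('a) (f1 + e) else 0)"
proof -
  have "ecss_rho n f0 f1 e gQ gF1 GE (\<lambda>s s'. if s = a \<and> s' = a then 1 else 0) w w'
     = (\<Sum>s\<in>S. \<Sum>s'\<in>S. if s = a \<and> s' = a then
          (if w \<in> W a then cst TYPE('a) (f1 + e) else 0) * (if w' \<in> W a then cst TYPE('a) (f1 + e) else 0) else 0)"
    unfolding rho_eq by (intro sum.cong refl) auto
  also have "\<dots> = (if w \<in> W a then cst TYPE('a) (f1 + e) else 0) * (if w' \<in> W a then cst TYPE('a) (f1 + e) else 0)"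
    by (rule sum2_delta[OF finite_words finite_words a a])
  finally show ?thesis .
qed

lemma Bw_add: "x \<in> Bw A \<Longrightarrow> y \<in> Bw A \<Longrightarrow> x + y \<in> Bw A"
  unfolding Bw_def by (rule words_on_add)
lemma Bw_diff: "x \<in> Bw A \<Longrightarrow> y \<in> Bw A \<Longrightarrow> x - y \<in> Bw A"
  unfolding Bw_def by (rule words_on_diff)

lemma G2:
  assumes s1: "s1 \<in> S" "s1 \<noteq> 0" and X0: "X0 \<in> W s1" "\<forall>i\<in>A. X0 i = 0"
  shows "\<not> ecss_authorized n f0 f1 e gQ gF1 GE A"
proof
  assume auth: "ecss_authorized n f0 f1 e gQ gF1 GE A"
  let ?r0 = "\<lambda>s s'. if s = 0 \<and> s' = 0 then 1 else (0::complex)"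
  let ?r1 = "\<lambda>s s'. if s = s1 \<and> s' = s1 then 1 else (0::complex)"
  let ?c = "cst TYPE('a) (f1 + e)"
  have X0B: "X0 \<in> Bw A" unfolding Bw_iff using X0 W_words by blast
  have shift: "w + X0 \<in> W s1 \<longleftrightarrow> w \<in> W 0" for w
  proof
    assume "w + X0 \<in> W s1"
    from W_diff[OF this X0(1)] show "w \<in> W 0" by simp
  next
    assume "w \<in> W 0"
    from W_add[OF this X0(1)] show "w + X0 \<in> W s1" by simp
  qed
  have bij: "bij_betw (\<lambda>z. z + X0) (Bw A) (Bw A)"
    by (rule bij_betw_byWitness[where f'="\<lambda>z. z - X0"]) (auto intro: Bw_add Bw_diff X0B)
  have PTeq: "partial_trace NN A (ecss_rho n f0 f1 e gQ gF1 GE ?r1) x y = partial_trace NN A (ecss_rho n f0 f1 e gQ gF1 GE ?r0) x y"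
    if "x \<in> Aw A" "y \<in> Aw A" for x y
  proof -
    have "partial_trace NN A (ecss_rho n f0 f1 e gQ gF1 GE ?r1) x y
        = (\<Sum>z\<in>Bw A. (if x + z \<in> W s1 then ?c else 0) * (if y + z \<in> W s1 then ?c else 0))"
      unfolding PT_eq Bw_def[symmetric] rho_delta[OF s1(1)] ..
    also have "\<dots> = (\<Sum>z\<in>Bw A. (if x + (z + X0) \<in> W s1 then ?c else 0) * (if y + (z + X0) \<in> W s1 then ?c else 0))"
      by (rule sum.reindex_bij_betw[OF bij, symmetric])
    also have "\<dots> = (\<Sum>z\<in>Bw A. (if x + z \<in> W 0 then ?c else 0) * (if y + z \<in> W 0 then ?c else 0))"
      by (intro sum.cong refl) (simp add: add.assoc[symmetric] shift)
    also have "\<dots> = partial_trace NN A (ecss_rho n f0 f1 e gQ gF1 GE ?r0) x y"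
      unfolding PT_eq Bw_def[symmetric] rho_delta[OF words_zero] ..
    finally show ?thesis .
  qed
  note not_auth_gen[OF auth is_density_delta[OF s1(1)] is_density_delta[OF words_zero] PTeq words_zero words_zero]
  then show False using s1(2) by simp
qed

lemma G3:
  assumes d: "\<delta> \<in> S" and Y: "\<forall>w\<in>Aw A. ip NN Y w = 0" "\<forall>w\<in>W 0. ip NN Y w = 0" "\<forall>w\<in>W \<delta>. ip NN Y w \<noteq> 0"
  shows "\<not> ecss_authorized n f0 f1 e gQ gF1 GE A"
proof
  assume auth: "ecss_authorized n f0 f1 e gQ gF1 GE A"
  let ?P = "{0, \<delta>}"
  let ?rP = "\<lambda>s s'. if s \<in> ?P \<and> s' \<in> ?P then 1/2 else (0::complex)"
  let ?rD = "\<lambda>s s'. if s = s' \<and> s \<in> ?P then 1/2 else (0::complex)"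
  have Ed: "E \<delta> 0 0 \<in> W \<delta>" unfolding W_def using words_zero by blast
  have d0: "\<delta> \<noteq> 0"
  proof
    assume "\<delta> = 0"
    then show False using Ed Y(2,3) by auto
  qed
  have Psub: "?P \<subseteq> S" using d by simp
  have Pcard: "card ?P = 2" using d0 by simp
  have key: "\<not> (x + z \<in> W s \<and> y + z \<in> W s')"
    if xy: "x \<in> Aw A" "y \<in> Aw A" and z: "z \<in> Bw A" and ss: "s \<in> ?P" "s' \<in> ?P" "s \<noteq> s'" for x y z s s'
  proof
    assume h: "x + z \<in> W s \<and> y + z \<in> W s'"
    have "ip NN Y (x + z) = ip NN Y z" "ip NN Y (y + z) = ip NN Y z"
      using Y(1) xy by (simp_all add: ip_add)
    then show False using h ss Y(2,3) by auto
  qed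
  have PTeq: "partial_trace NN A (ecss_rho n f0 f1 e gQ gF1 GE ?rP) x y = partial_trace NN A (ecss_rho n f0 f1 e gQ gF1 GE ?rD) x y"
    if xy: "x \<in> Aw A" "y \<in> Aw A" for x y
    unfolding PT_eq Bw_def[symmetric]
  proof (rule sum.cong[OF refl])
    fix z assume z: "z \<in> Bw A"
    show "ecss_rho n f0 f1 e gQ gF1 GE ?rP (x + z) (y + z) = ecss_rho n f0 f1 e gQ gF1 GE ?rD (x + z) (y + z)"
      unfolding rho_eq
    proof (intro sum.cong refl)
      fix s s' assume "s \<in> S" "s' \<in> S"
      show "?rP s s' * (if x + z \<in> W s then cst TYPE('a) (f1 + e) else 0) * (if y + z \<in> W s' then cst TYPE('a) (f1 + e) else 0)
          = ?rD s s' * (if x + z \<in> W s then cst TYPE('a) (f1 + e) else 0) * (if y + z \<in> W s' then cst TYPE('a) (f1 + e) else 0)"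
      proof (cases "s = s'")
        case True then show ?thesis by simp
      next
        case False
        show ?thesis
        proof (cases "s \<in> ?P \<and> s' \<in> ?P")
          case True
          then have "\<not> (x + z \<in> W s \<and> y + z \<in> W s')" using key[OF xy z] False by blast
          then show ?thesis using False by auto
        next
          case F2: False then show ?thesis using False by auto
        qed
      qed
    qed
  qed
  note not_auth_gen[OF auth is_density_P[OF Psub Pcard] is_density_D[OF Psub Pcard] PTeq words_zero d]
  then show False using d0 by simp
qed

end


context ecss
begin

lemma spv_iff: "x \<in> set_plus_vec X Y \<longleftrightarrow> (\<exists>a b. x = (\<lambda>i. a i + b i) \<and> a \<in> X \<and> b \<in> Y)"
  unfolding set_plus_vec_def by blast

lemma span_iff: "x \<in> span_rows g m \<longleftrightarrow> (\<exists>c. x = lincomb g m c)"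
  unfolding span_rows_def by blast

lemma lincomb_zero_coeff: "(\<And>k. k < m \<Longrightarrow> c k = 0) \<Longrightarrow> lincomb g m c = (\<lambda>_. 0)"
  unfolding lincomb_def by (simp add: fun_eq_iff)

lemma stk_F1: "lincomb gF1 f1 ca = lincomb stk f0 (\<lambda>k. if k < f0 - f1 then 0 else ca (k - (f0 - f1)))"
proof -
  let ?c = "\<lambda>k. if k < f0 - f1 then 0 else ca (k - (f0 - f1))"
  have "lincomb stk f0 ?c = lincomb stk ((f0 - f1) + f1) ?c" using f0_eq by simp
  also have "\<dots> = (\<lambda>i. lincomb gQ (f0 - f1) ?c i + lincomb gF1 f1 (\<lambda>k. ?c (f0 - f1 + k)) i)"
    by (rule lincomb_split_stack)
  also have "lincomb gQ (f0 - f1) ?c = (\<lambda>_. 0)" by (rule lincomb_zero_coeff) simp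
  also have "(\<lambda>k. ?c (f0 - f1 + k)) = ca" by (simp add: fun_eq_iff)
  finally show ?thesis by simp
qed

lemma stk_Q: "lincomb gQ (f0 - f1) sq = lincomb stk f0 (\<lambda>k. if k < f0 - f1 then sq k else 0)"
proof -
  let ?c = "\<lambda>k. if k < f0 - f1 then sq k else 0"
  have "lincomb stk f0 ?c = lincomb stk ((f0 - f1) + f1) ?c" using f0_eq by simp
  also have "\<dots> = (\<lambda>i. lincomb gQ (f0 - f1) ?c i + lincomb gF1 f1 (\<lambda>k. ?c (f0 - f1 + k)) i)"
    by (rule lincomb_split_stack)
  also have "lincomb gF1 f1 (\<lambda>k. ?c (f0 - f1 + k)) = (\<lambda>_. 0)" by (rule lincomb_zero_coeff) simp
  also have "lincomb gQ (f0 - f1) ?c = lincomb gQ (f0 - f1) sq" by (rule lincomb_cong) simp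
  finally show ?thesis by simp
qed

lemma GE_split: "u \<le> e \<Longrightarrow> lincomb GE e d = (\<lambda>i. lincomb GE u d i + lincomb (\<lambda>k. GE (u+k)) (e-u) (\<lambda>k. d (u+k)) i)"
  using lincomb_split[of GE u "e - u" d] by simp

lemma GE_shift: assumes "u \<le> e"
  shows "lincomb (\<lambda>k. GE (u+k)) (e-u) cb = lincomb GE e (\<lambda>k. if k < u then 0 else cb (k - u))"
proof -
  have "lincomb GE e (\<lambda>k. if k < u then 0 else cb (k - u))
     = (\<lambda>i. lincomb GE u (\<lambda>k. if k < u then 0 else cb (k - u)) i
          + lincomb (\<lambda>k. GE (u+k)) (e-u) (\<lambda>k. if u + k < u then 0 else cb (u + k - u)) i)"
    by (rule GE_split[OF assms])
  also have "lincomb GE u (\<lambda>k. if k < u then 0 else cb (k - u)) = (\<lambda>_. 0)" by (rule lincomb_zero_coeff) simp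
  also have "(\<lambda>k. if u + k < u then 0 else cb (u + k - u)) = cb" by (simp add: fun_eq_iff)
  finally show ?thesis by simp
qed

lemma notF1V:
  assumes ue: "u \<le> e"
    and mem: "(\<lambda>i. lincomb stk f0 c i + lincomb GE e d i) \<in> set_plus_vec (span_rows gF1 f1) (span_rows (\<lambda>k. GE (u+k)) (e-u))"
  shows "\<forall>k<f0-f1. c k = 0"
proof -
  obtain ca cb where eq: "(\<lambda>i. lincomb stk f0 c i + lincomb GE e d i)
      = (\<lambda>i. lincomb gF1 f1 ca i + lincomb (\<lambda>k. GE (u+k)) (e-u) cb i)"
    using mem unfolding spv_iff span_iff by blast
  let ?ca = "\<lambda>k. if k < f0 - f1 then 0 else ca (k - (f0 - f1))"
  let ?cb = "\<lambda>k. if k < u then 0 else cb (k - u)"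
  have "lincomb stk f0 (\<lambda>k. c k - ?ca k) = lincomb GE e (\<lambda>k. ?cb k - d k)"
  proof -
    have "lincomb stk f0 (\<lambda>k. c k - ?ca k) = lincomb stk f0 c - lincomb stk f0 ?ca" by (simp add: lincomb_diff)
    also have "\<dots> = lincomb GE e ?cb - lincomb GE e d"
      using eq unfolding stk_F1 GE_shift[OF ue] by (simp add: fun_eq_iff algebra_simps)
    also have "\<dots> = lincomb GE e (\<lambda>k. ?cb k - d k)" by (simp add: lincomb_diff)
    finally show ?thesis .
  qed
  then have "\<forall>k<f0. c k - ?ca k = 0" by (rule KeyX)
  then show ?thesis using f1_lt by auto
qed

end


context ecss
begin

lemma E_parts: "i < n \<Longrightarrow> E s r1 r2 i = cw s r1 r2 i" "E s r1 r2 (n + k) = r2 k"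
  unfolding E_def join_word_def by simp_all

lemma cw_fun: "cw s r1 r2 = (\<lambda>i. lincomb stk f0 (\<lambda>k. if k < f0 - f1 then s k else r1 (k - (f0 - f1))) i + lincomb GE e r2 i)"
  unfolding cw_lincomb by (simp add: plus_fun_def)

lemma XW:
  assumes ue: "u \<le> e" and s: "s \<in> S" "s \<noteq> 0" and w: "w \<in> W s"
    and van: "\<forall>i\<in>J \<union> {n..<n+u}. w i = 0" and J: "J \<subseteq> {..<n}"
  shows "\<exists>x. x \<in> set_plus_vec (span_rows stk f0) (span_rows (\<lambda>k. GE (u+k)) (e-u))
           - set_plus_vec (span_rows gF1 f1) (span_rows (\<lambda>k. GE (u+k)) (e-u)) \<and> x \<in> words n \<and> (\<forall>i\<in>J. x i = 0)"
proof -
  obtain r1 r2 where r: "w = E s r1 r2" "r1 \<in> words f1" "r2 \<in> words e" using w unfolding W_def by blast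
  let ?c = "\<lambda>k. if k < f0 - f1 then s k else r1 (k - (f0 - f1))"
  have r2u: "r2 k = 0" if "k < u" for k using van that r(1) E_parts(2)[of s r1 r2 k] by auto
  have "lincomb GE e r2 = (\<lambda>i. lincomb GE u r2 i + lincomb (\<lambda>k. GE (u+k)) (e-u) (\<lambda>k. r2 (u+k)) i)"
    by (rule GE_split[OF ue])
  also have "lincomb GE u r2 = (\<lambda>_. 0)" by (rule lincomb_zero_coeff) (simp add: r2u)
  finally have GEr: "lincomb GE e r2 = lincomb (\<lambda>k. GE (u+k)) (e-u) (\<lambda>k. r2 (u+k))" by simp
  let ?x = "cw s r1 r2"
  have xF0V: "?x \<in> set_plus_vec (span_rows stk f0) (span_rows (\<lambda>k. GE (u+k)) (e-u))"
    unfolding spv_iff span_iff cw_fun GEr by blast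
  have xF1V: "?x \<notin> set_plus_vec (span_rows gF1 f1) (span_rows (\<lambda>k. GE (u+k)) (e-u))"
  proof
    assume "?x \<in> set_plus_vec (span_rows gF1 f1) (span_rows (\<lambda>k. GE (u+k)) (e-u))"
    then have "\<forall>k<f0-f1. ?c k = 0" using notF1V[OF ue] unfolding cw_fun by blast
    then have "\<forall>k<f0-f1. s k = 0" by auto
    then have "s = 0"
    proof -
      assume a: "\<forall>k<f0-f1. s k = 0"
      show "s = 0"
      proof
        fix k show "s k = 0 k" using a s(1) unfolding words_def by (cases "k < f0 - f1") auto
      qed
    qed
    then show False using s(2) by simp
  qed
  have "\<forall>i\<in>J. ?x i = 0"
  proof
    fix i assume i: "i \<in> J"
    then have "i < n" using J by auto
    then show "?x i = 0" using van i r(1) E_parts(1)[of i s r1 r2] by auto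
  qed
  then show ?thesis using xF0V xF1V cw_words by blast
qed

lemma XW_conv:
  assumes ue: "u \<le> e"
    and x: "x \<in> set_plus_vec (span_rows stk f0) (span_rows (\<lambda>k. GE (u+k)) (e-u))"
           "x \<notin> set_plus_vec (span_rows gF1 f1) (span_rows (\<lambda>k. GE (u+k)) (e-u))"
  shows "\<exists>s\<in>S. s \<noteq> 0 \<and> (\<exists>w\<in>W s. (\<forall>i<n. w i = x i) \<and> (\<forall>k<u. w (n+k) = 0))"
proof -
  obtain c cb where xe: "x = (\<lambda>i. lincomb stk f0 c i + lincomb (\<lambda>k. GE (u+k)) (e-u) cb i)"
    using x(1) unfolding spv_iff span_iff by blast
  define s where "s = (\<lambda>k. if k < f0 - f1 then c k else 0)"
  define r1 where "r1 = (\<lambda>k. if k < f1 then c (f0 - f1 + k) else 0)"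
  define r2 where "r2 = (\<lambda>k. if u \<le> k \<and> k < e then cb (k - u) else 0)"
  have sS: "s \<in> S" "r1 \<in> words f1" "r2 \<in> words e" unfolding s_def r1_def r2_def words_def by auto
  have c1: "lincomb stk f0 (\<lambda>k. if k < f0 - f1 then s k else r1 (k - (f0 - f1))) = lincomb stk f0 c"
    by (rule lincomb_cong) (auto simp: s_def r1_def)
  have "lincomb GE e r2 = (\<lambda>i. lincomb GE u r2 i + lincomb (\<lambda>k. GE (u+k)) (e-u) (\<lambda>k. r2 (u+k)) i)"
    by (rule GE_split[OF ue])
  also have "lincomb GE u r2 = (\<lambda>_. 0)" by (rule lincomb_zero_coeff) (simp add: r2_def)
  also have "lincomb (\<lambda>k. GE (u+k)) (e-u) (\<lambda>k. r2 (u+k)) = lincomb (\<lambda>k. GE (u+k)) (e-u) cb"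
    by (rule lincomb_cong) (auto simp: r2_def)
  finally have c2: "lincomb GE e r2 = lincomb (\<lambda>k. GE (u+k)) (e-u) cb" by simp
  have cwx: "cw s r1 r2 = x" unfolding cw_fun c1 c2 xe ..
  have s0: "s \<noteq> 0"
  proof
    assume "s = 0"
    then have ck: "c k = 0" if "k < f0 - f1" for k using that fun_cong[of s 0 k] unfolding s_def by auto
    have "lincomb stk f0 c = lincomb stk f0 (\<lambda>k. if k < f0 - f1 then 0 else c (f0 - f1 + (k - (f0 - f1))))"
      by (rule lincomb_cong) (auto simp: ck)
    also have "\<dots> = lincomb gF1 f1 (\<lambda>k. c (f0 - f1 + k))" by (rule stk_F1[symmetric])
    finally have "x = (\<lambda>i. lincomb gF1 f1 (\<lambda>k. c (f0 - f1 + k)) i + lincomb (\<lambda>k. GE (u+k)) (e-u) cb i)"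
      unfolding xe by simp
    then have "x \<in> set_plus_vec (span_rows gF1 f1) (span_rows (\<lambda>k. GE (u+k)) (e-u))"
      unfolding spv_iff span_iff by blast
    then show False using x(2) by simp
  qed
  have "E s r1 r2 \<in> W s" unfolding W_def using sS by blast
  moreover have "\<forall>i<n. E s r1 r2 i = x i" using E_parts(1) cwx by simp
  moreover have "\<forall>k<u. E s r1 r2 (n+k) = 0" using E_parts(2) by (simp add: r2_def)
  ultimately show ?thesis using sS(1) s0 by blast
qed

end


context ecss
begin

lemma cw_fun2: "cw s r1 r2 = (\<lambda>i. lincomb gQ (f0 - f1) s i + lincomb gF1 f1 r1 i + lincomb GE e r2 i)"
  unfolding cw_def ecss_cw_def lincomb_def ..

lemma in_F1U_1: "k < f1 \<Longrightarrow> gF1 k \<in> set_plus_vec (span_rows gF1 f1) (span_rows GE u)"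
  unfolding spv_iff span_iff
  by (intro exI[of _ "gF1 k"] exI[of _ "\<lambda>_. 0"] conjI exI[of _ "\<lambda>j. if j = k then 1 else 0"] exI[of _ "\<lambda>_. 0"])
     (simp_all add: lincomb_unit lincomb_zero_coeff)

lemma in_F1U_2: "k < u \<Longrightarrow> GE k \<in> set_plus_vec (span_rows gF1 f1) (span_rows GE u)"
  unfolding spv_iff span_iff
  by (intro exI[of _ "\<lambda>_. 0"] exI[of _ "GE k"] conjI exI[of _ "\<lambda>_. 0"] exI[of _ "\<lambda>j. if j = k then 1 else 0"])
     (simp_all add: lincomb_unit lincomb_zero_coeff)

lemma dual_ip: "y \<in> dual n X \<Longrightarrow> c \<in> X \<Longrightarrow> ip n y c = 0"
  unfolding dual_def ip_def by blast

lemma ZW: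
  assumes ue: "u \<le> e" and J: "J \<subseteq> {..<n}" and s: "s \<in> S"
    and noY: "\<And>y. y \<in> dual n (set_plus_vec (span_rows gF1 f1) (span_rows GE u)) \<Longrightarrow> \<forall>i\<in>J. y i = 0
              \<Longrightarrow> y \<in> dual n (set_plus_vec (span_rows stk f0) (span_rows GE u))"
  shows "\<exists>w\<in>W s. \<forall>i. i \<notin> J \<union> {n..<n+u} \<longrightarrow> w i = 0"
proof -
  define h where "h = (\<lambda>j i. if j \<in> J \<and> i = j then 1 else (0::'a))"
  define g where "g = stack gF1 f1 (stack GE u h)"
  define wq where "wq = lincomb gQ (f0 - f1) s"
  have gw: "\<forall>k<f1 + (u + n). g k \<in> words n"
  proof (intro allI impI)
    fix k assume k: "k < f1 + (u + n)"
    consider "k < f1" | "f1 \<le> k" "k < f1 + u" | "f1 + u \<le> k" by linarith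
    then show "g k \<in> words n"
    proof cases
      case 1 then show ?thesis using gF1_w by (simp add: g_def stack_def)
    next
      case 2
      then have "k - f1 < u" "\<not> k < f1" by linarith+
      then have "g k = GE (k - f1)" by (simp add: g_def stack_def)
      then show ?thesis using GE_w ue \<open>k - f1 < u\<close> by simp
    next
      case 3
      have "h j \<in> words n" for j using J unfolding h_def words_def by auto
      moreover have "\<not> k < f1" "\<not> k - f1 < u" using 3 by linarith+
      ultimately show ?thesis by (simp add: g_def stack_def)
    qed
  qed
  have wqw: "wq \<in> words n" unfolding wq_def using lincomb_words gQ_w by blast
  have inspan: "wq \<in> span_rows g (f1 + (u + n))"
  proof (rule ccontr)
    assume ns: "wq \<notin> span_rows g (f1 + (u + n))"
    obtain y where y: "y \<in> words n" "\<forall>k<f1 + (u + n). ip n y (g k) = 0" "ip n y wq \<noteq> 0"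
      using farkas[OF gw wqw ns] by blast
    have yF1: "ip n y (gF1 k) = 0" if "k < f1" for k
      using y(2)[rule_format, of k] that by (simp add: g_def stack_def)
    have yU: "ip n y (GE k) = 0" if "k < u" for k
      using y(2)[rule_format, of "f1 + k"] that by (simp add: g_def stack_def)
    have yJ: "\<forall>i\<in>J. y i = 0"
    proof
      fix i assume i: "i \<in> J"
      then have iN: "i < n" using J by auto
      have "ip n y (g (f1 + (u + i))) = 0" using y(2) iN by simp
      moreover have "g (f1 + (u + i)) = h i" by (simp add: g_def stack_def)
      moreover have "ip n y (h i) = y i" unfolding ip_def h_def using i iN
        by (simp add: if_distrib[of "\<lambda>x. _ * x"] cong: if_cong)
      ultimately show "y i = 0" by simp
    qed
    have yd: "y \<in> dual n (set_plus_vec (span_rows gF1 f1) (span_rows GE u))"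
      unfolding dual_def
    proof (intro CollectI conjI ballI)
      show "y \<in> words n" by (rule y(1))
      fix c assume "c \<in> set_plus_vec (span_rows gF1 f1) (span_rows GE u)"
      then obtain ca cb where c: "c = (\<lambda>i. lincomb gF1 f1 ca i + lincomb GE u cb i)"
        unfolding spv_iff span_iff by blast
      have "ip n y c = ip n y (lincomb gF1 f1 ca) + ip n y (lincomb GE u cb)"
        unfolding c using ip_add[of n y "lincomb gF1 f1 ca" "lincomb GE u cb"] by (simp add: plus_fun_def)
      also have "\<dots> = 0" unfolding ip_lincomb using yF1 yU by simp
      finally show "(\<Sum>i<n. y i * c i) = 0" unfolding ip_def .
    qed
    have "y \<in> dual n (set_plus_vec (span_rows stk f0) (span_rows GE u))" by (rule noY[OF yd yJ])
    moreover have "wq \<in> set_plus_vec (span_rows stk f0) (span_rows GE u)"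
    proof -
      have z: "lincomb GE u (\<lambda>_. 0) = (\<lambda>_. 0)" by (rule lincomb_zero_coeff) simp
      have "wq = (\<lambda>i. lincomb stk f0 (\<lambda>k. if k < f0 - f1 then s k else 0) i + lincomb GE u (\<lambda>_. 0) i)"
        unfolding wq_def stk_Q z by simp
      then show ?thesis unfolding spv_iff span_iff by blast
    qed
    ultimately have "ip n y wq = 0" by (rule dual_ip)
    then show False using y(3) by simp
  qed
  then obtain c where c: "wq = lincomb g (f1 + (u + n)) c" unfolding span_iff by blast
  have split: "wq = (\<lambda>i. lincomb gF1 f1 c i + (lincomb GE u (\<lambda>k. c (f1+k)) i + lincomb h n (\<lambda>k. c (f1 + (u + k))) i))"
    unfolding c g_def by (simp add: lincomb_split_stack)
  define r1 where "r1 = (\<lambda>k. if k < f1 then - c k else 0)"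
  define r2 where "r2 = (\<lambda>k. if k < u then - c (f1 + k) else 0)"
  have rw: "r1 \<in> words f1" "r2 \<in> words e" using ue unfolding r1_def r2_def words_def by auto
  have l1: "lincomb gF1 f1 r1 = (\<lambda>i. - lincomb gF1 f1 c i)"
    unfolding lincomb_def r1_def by (simp add: sum_negf[symmetric])
  have "lincomb GE e r2 = (\<lambda>i. lincomb GE u r2 i + lincomb (\<lambda>k. GE (u+k)) (e-u) (\<lambda>k. r2 (u+k)) i)"
    by (rule GE_split[OF ue])
  also have "lincomb (\<lambda>k. GE (u+k)) (e-u) (\<lambda>k. r2 (u+k)) = (\<lambda>_. 0)" by (rule lincomb_zero_coeff) (simp add: r2_def)
  also have "lincomb GE u r2 = (\<lambda>i. - lincomb GE u (\<lambda>k. c (f1+k)) i)"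
    unfolding lincomb_def r2_def by (simp add: sum_negf[symmetric])
  finally have l2: "lincomb GE e r2 = (\<lambda>i. - lincomb GE u (\<lambda>k. c (f1+k)) i)" by simp
  have cwv: "cw s r1 r2 i = lincomb h n (\<lambda>k. c (f1 + (u + k))) i" for i
  proof -
    have "cw s r1 r2 i = wq i - lincomb gF1 f1 c i - lincomb GE u (\<lambda>k. c (f1+k)) i"
      unfolding cw_fun2 l1 l2 wq_def by simp
    also have "\<dots> = lincomb h n (\<lambda>k. c (f1 + (u + k))) i"
      using fun_cong[OF split, of i] by simp
    finally show ?thesis .
  qed
  have hv: "lincomb h n d i = 0" if "i \<notin> J" for d i
    unfolding lincomb_def h_def using that by (intro sum.neutral) auto
  have "E s r1 r2 \<in> W s" unfolding W_def using rw by blast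
  moreover have "\<forall>i. i \<notin> J \<union> {n..<n+u} \<longrightarrow> E s r1 r2 i = 0"
  proof (intro allI impI)
    fix i assume i: "i \<notin> J \<union> {n..<n+u}"
    show "E s r1 r2 i = 0"
    proof (cases "i < n")
      case True
      then show ?thesis using E_parts(1)[OF True] cwv hv i by simp
    next
      case False
      then have "i = n + (i - n)" "\<not> i - n < u" using i by auto
      then show ?thesis using E_parts(2)[of s r1 r2 "i - n"] by (simp add: r2_def)
    qed
  qed
  ultimately show ?thesis by blast
qed

end


context ecss
begin

lemma ZW_conv:
  assumes ue: "u \<le> e" and J: "J \<subseteq> {..<n}"
    and y: "y \<in> dual n (set_plus_vec (span_rows gF1 f1) (span_rows GE u))"
           "y \<notin> dual n (set_plus_vec (span_rows stk f0) (span_rows GE u))"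
    and yJ: "\<forall>i\<in>J. y i = 0"
  shows "\<not> ecss_authorized n f0 f1 e gQ gF1 GE (J \<union> {n..<n+u})"
proof -
  have yw: "y \<in> words n" using y(1) unfolding dual_def by blast
  have yF1: "ip n y (gF1 k) = 0" if "k < f1" for k by (rule dual_ip[OF y(1) in_F1U_1[OF that]])
  have yU: "ip n y (GE k) = 0" if "k < u" for k by (rule dual_ip[OF y(1) in_F1U_2[OF that]])
  obtain k0 where k0: "k0 < f0 - f1" "ip n y (gQ k0) \<noteq> 0"
  proof -
    obtain c where c: "c \<in> set_plus_vec (span_rows stk f0) (span_rows GE u)" "ip n y c \<noteq> 0"
      using y(2) yw unfolding dual_def ip_def by blast
    then obtain ca cb where cc: "c = (\<lambda>i. lincomb stk f0 ca i + lincomb GE u cb i)"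
      unfolding spv_iff span_iff by blast
    have "ip n y c = ip n y (lincomb stk f0 ca) + ip n y (lincomb GE u cb)"
      unfolding cc using ip_add[of n y "lincomb stk f0 ca" "lincomb GE u cb"] by (simp add: plus_fun_def)
    also have "ip n y (lincomb GE u cb) = 0" unfolding ip_lincomb using yU by simp
    finally have "(\<Sum>k<f0. ca k * ip n y (stk k)) \<noteq> 0" using c(2) unfolding ip_lincomb by simp
    have "\<exists>k\<in>{..<f0}. ca k * ip n y (stk k) \<noteq> 0"
    proof (rule ccontr)
      assume "\<not> (\<exists>k\<in>{..<f0}. ca k * ip n y (stk k) \<noteq> 0)"
      then have "(\<Sum>k<f0. ca k * ip n y (stk k)) = 0" by (intro sum.neutral) blast
      then show False using \<open>(\<Sum>k<f0. ca k * ip n y (stk k)) \<noteq> 0\<close> by simp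
    qed
    then obtain k where k: "k < f0" "ip n y (stk k) \<noteq> 0" by auto
    have "k < f0 - f1"
    proof (rule ccontr)
      assume "\<not> k < f0 - f1"
      then have "stk k = gF1 (k - (f0 - f1))" "k - (f0 - f1) < f1" using k(1) by (auto simp: stack_def)
      then show False using k(2) yF1 by simp
    qed
    moreover then have "stk k = gQ k" by (simp add: stack_def)
    ultimately show ?thesis using that k(2) by simp
  qed
  define A where "A = J \<union> {n..<n+u}"
  define \<delta> where "\<delta> = (\<lambda>j. if j = k0 then 1 else (0::'a))"
  define Y where "Y = (\<lambda>i. if i < n then y i else if i < NN then - ip n y (GE (i - n)) else 0)"
  have dS: "\<delta> \<in> S" using k0(1) unfolding \<delta>_def words_def by auto
  have ipsplit: "ip NN Y w = (\<Sum>i<n. y i * w i) + (\<Sum>k<e. - ip n y (GE k) * w (n + k))" for w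
  proof -
    have "ip NN Y w = (\<Sum>i<n. Y i * w i) + (\<Sum>k<e. Y (n+k) * w (n+k))"
      unfolding ip_def by (rule sum_split_add)
    also have "(\<Sum>i<n. Y i * w i) = (\<Sum>i<n. y i * w i)" by (rule sum.cong) (simp_all add: Y_def)
    also have "(\<Sum>k<e. Y (n+k) * w (n+k)) = (\<Sum>k<e. - ip n y (GE k) * w (n + k))"
      by (rule sum.cong) (simp_all add: Y_def)
    finally show ?thesis .
  qed
  have ipE: "ip NN Y (E s r1 r2) = (\<Sum>k<f0-f1. s k * ip n y (gQ k))" for s r1 r2
  proof -
    have "(\<Sum>i<n. y i * E s r1 r2 i) = ip n y (cw s r1 r2)" unfolding ip_def using E_parts(1) by simp
    also have "cw s r1 r2 = lincomb gQ (f0 - f1) s + lincomb gF1 f1 r1 + lincomb GE e r2"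
      unfolding cw_fun2 by (simp add: fun_eq_iff)
    also have "ip n y (lincomb gQ (f0 - f1) s + lincomb gF1 f1 r1 + lincomb GE e r2)
       = ip n y (lincomb gQ (f0 - f1) s) + ip n y (lincomb gF1 f1 r1) + ip n y (lincomb GE e r2)"
      by (simp only: ip_add)
    also have "ip n y (lincomb gF1 f1 r1) = 0" unfolding ip_lincomb using yF1 by simp
    finally have "(\<Sum>i<n. y i * E s r1 r2 i) = (\<Sum>k<f0-f1. s k * ip n y (gQ k)) + (\<Sum>k<e. r2 k * ip n y (GE k))"
      unfolding ip_lincomb by simp
    moreover have "(\<Sum>k<e. - ip n y (GE k) * E s r1 r2 (n + k)) = - (\<Sum>k<e. r2 k * ip n y (GE k))"
      unfolding E_parts(2) by (simp add: sum_negf[symmetric] mult.commute)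
    ultimately show ?thesis unfolding ipsplit by simp
  qed
  have Y1: "\<forall>w\<in>Aw A. ip NN Y w = 0"
  proof
    fix w assume w: "w \<in> Aw A"
    have "(\<Sum>i<n. y i * w i) = 0"
    proof (rule sum.neutral, rule ballI)
      fix i assume "i \<in> {..<n}"
      show "y i * w i = 0"
      proof (cases "i \<in> J")
        case True then show ?thesis using yJ by simp
      next
        case False
        then have "i \<notin> A" using \<open>i \<in> {..<n}\<close> unfolding A_def by auto
        then show ?thesis using w unfolding Aw_iff by simp
      qed
    qed
    moreover have "(\<Sum>k<e. - ip n y (GE k) * w (n + k)) = 0"
    proof (rule sum.neutral, rule ballI)
      fix k assume "k \<in> {..<e}"
      show "- ip n y (GE k) * w (n + k) = 0"
      proof (cases "k < u")
        case True then show ?thesis using yU by simp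
      next
        case False
        then have "n + k \<notin> A" using J unfolding A_def by auto
        then show ?thesis using w unfolding Aw_iff by simp
      qed
    qed
    ultimately show "ip NN Y w = 0" unfolding ipsplit by simp
  qed
  have Y2: "\<forall>w\<in>W 0. ip NN Y w = 0" unfolding W_def using ipE by auto
  have Y3: "\<forall>w\<in>W \<delta>. ip NN Y w \<noteq> 0"
  proof
    fix w assume "w \<in> W \<delta>"
    then obtain r1 r2 where "w = E \<delta> r1 r2" unfolding W_def by blast
    then have "ip NN Y w = (\<Sum>k<f0-f1. \<delta> k * ip n y (gQ k))" using ipE by simp
    also have "\<dots> = ip n y (gQ k0)" unfolding \<delta>_def using k0(1)
      by (simp add: if_distrib[of "\<lambda>x. x * _"] cong: if_cong)
    finally show "ip NN Y w \<noteq> 0" using k0(2) by simp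
  qed
  show ?thesis using G3[OF dS Y1 Y2 Y3] unfolding A_def .
qed

end


lemma wt_le_n: "wt n x \<le> n"
proof -
  have "card {i. i < n \<and> x i \<noteq> 0} \<le> card {..<n}" by (rule card_mono) auto
  then show ?thesis unfolding wt_def by simp
qed

lemma wt_J: assumes "J \<subseteq> {..<n}" "card J = tau" "\<forall>i\<in>J. x i = 0" shows "wt n x \<le> n - tau"
proof -
  have fJ: "finite J" using assms(1) finite_subset by blast
  have "card {i. i < n \<and> x i \<noteq> 0} \<le> card ({..<n} - J)" by (rule card_mono) (use assms(3) in auto)
  also have "\<dots> = n - tau" using card_Diff_subset[OF fJ assms(1)] assms(2) by simp
  finally show ?thesis unfolding wt_def .
qed

lemma finite_wt_img: "finite (wt n ` X)"
  by (rule finite_subset[of _ "{..n}"]) (auto simp: wt_le_n)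

lemma wt_diff_le: "x \<in> X - Y \<Longrightarrow> wt_diff n X Y \<le> wt n x"
  unfolding wt_diff_def by (rule Min_le[OF finite_wt_img]) simp

lemma wt_diff_in: assumes "X - Y \<noteq> {}" shows "\<exists>x\<in>X - Y. wt n x = wt_diff n X Y"
proof -
  have "Min (wt n ` (X - Y)) \<in> wt n ` (X - Y)" using assms by (intro Min_in finite_wt_img) simp
  then show ?thesis unfolding wt_diff_def by force
qed

lemma choose_J: assumes "wt n x \<le> n - tau" "tau \<le> n"
  shows "\<exists>J. J \<subseteq> {..<n} \<and> card J = tau \<and> (\<forall>i\<in>J. x i = 0)"
proof -
  let ?C = "{..<n} - {i. i < n \<and> x i \<noteq> 0}"
  have "card ?C = n - wt n x" unfolding wt_def by (subst card_Diff_subset) auto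
  then have "tau \<le> card ?C" using assms wt_le_n[of n x] by linarith
  then obtain J where "J \<subseteq> ?C" "card J = tau" by (rule obtain_subset_with_card_n)
  then show ?thesis by (intro exI[of _ J]) auto
qed

theorem theorem3:
  fixes gQ gF1 GE :: "nat \<Rightarrow> nat \<Rightarrow> 'a::{finite,field}"
    and F0 F1 :: "(nat \<Rightarrow> 'a) set"
    and n e u f0 f1 tau :: nat
  assumes "f1 < f0"
    and "\<forall>k<f0 - f1. gQ k \<in> words n"
    and "\<forall>k<f1. gF1 k \<in> words n"
    and "lin_indep_rows (stack gQ (f0 - f1) gF1) f0"
    and "F1 = span_rows gF1 f1"
    and "F0 = span_rows (stack gQ (f0 - f1) gF1) f0"
    and "\<forall>k<e. GE k \<in> words n"
    and "F0 \<inter> span_rows GE e = {(\<lambda>_. 0)}"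
    and "u \<le> e"
    and "tau \<le> n"
  shows "(\<forall>J. J \<subseteq> {..<n} \<and> card J = tau \<longrightarrow>
            ecss_authorized n f0 f1 e gQ gF1 GE (J \<union> {n..<n + u}))
         \<longleftrightarrow> int tau \<ge> tau_u n F0 F1 GE e u"
proof -
  have disj': "span_rows (stack gQ (f0 - f1) gF1) f0 \<inter> span_rows GE e = {(\<lambda>_. 0)}" using assms(6,8) by simp
  interpret ecss n f0 f1 e gQ gF1 GE
    by (rule ecss.intro[OF assms(1) assms(2) assms(3) assms(4) assms(7) disj'])
  have ue: "u \<le> e" and tn: "tau \<le> n" using assms(9,10) .
  define U where "U = span_rows GE u"
  define V where "V = span_rows (\<lambda>k. GE (u + k)) (e - u)"
  define d1 where "d1 = wt_diff n (set_plus_vec F0 V) (set_plus_vec F1 V)"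
  define d2 where "d2 = wt_diff n (dual n (set_plus_vec F1 U)) (dual n (set_plus_vec F0 U))"
  have tauu: "tau_u n F0 F1 GE e u = int n - int (min d1 d2) + 1"
    unfolding tau_u_def Let_def d1_def d2_def U_def V_def by simp
  define c0 where "c0 = (\<lambda>j. if j = (0::nat) then 1 else (0::'a))"
  have c00: "0 < f0 - f1" using assms(1) by simp
  have c0S: "c0 \<in> S" unfolding c0_def words_def using c00 by auto
  have z1: "lincomb GE e (\<lambda>_. 0) = (\<lambda>_. 0)" by (rule lincomb_zero_coeff) simp
  have z2: "lincomb (\<lambda>k. GE (u + k)) (e - u) (\<lambda>_. 0) = (\<lambda>_. 0)" by (rule lincomb_zero_coeff) simp
  have ne1: "set_plus_vec F0 V - set_plus_vec F1 V \<noteq> {}"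
  proof -
    let ?x = "(\<lambda>i. lincomb stk f0 c0 i + lincomb GE e (\<lambda>_. 0) i)"
    have "?x = (\<lambda>i. lincomb stk f0 c0 i + lincomb (\<lambda>k. GE (u + k)) (e - u) (\<lambda>_. 0) i)"
      unfolding z1 z2 ..
    then have "?x \<in> set_plus_vec F0 V" unfolding assms(6) V_def spv_iff span_iff by blast
    moreover have "?x \<notin> set_plus_vec F1 V"
    proof
      assume "?x \<in> set_plus_vec F1 V"
      then have "\<forall>k<f0-f1. c0 k = 0" using notF1V[OF ue] unfolding assms(5) V_def by blast
      then have "c0 0 = 0" using c00 by blast
      then show False unfolding c0_def by simp
    qed
    ultimately show ?thesis by blast
  qed
  have ne2: "dual n (set_plus_vec F1 U) - dual n (set_plus_vec F0 U) \<noteq> {}"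
  proof
    assume emp: "dual n (set_plus_vec F1 U) - dual n (set_plus_vec F0 U) = {}"
    have "\<exists>w\<in>W c0. \<forall>i. i \<notin> {} \<union> {n..<n+u} \<longrightarrow> w i = 0"
      by (rule ZW[OF ue _ c0S]) (use emp in \<open>auto simp: assms(5,6) U_def\<close>)
    then obtain r1 r2 where r: "\<forall>i. i \<notin> {n..<n+u} \<longrightarrow> E c0 r1 r2 i = 0"
      unfolding W_def by auto
    have "cw c0 r1 r2 = (\<lambda>_. 0)"
    proof
      fix i show "cw c0 r1 r2 i = 0"
      proof (cases "i < n")
        case True then show ?thesis using r E_parts(1)[OF True, of c0 r1 r2] by auto
      next
        case False then show ?thesis using cw_words[of c0 r1 r2] unfolding words_def by simp
      qed
    qed
    then have cw0: "cw c0 r1 r2 = (\<lambda>_. 0)" .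
    have "lincomb stk f0 (\<lambda>k. if k < f0 - f1 then c0 k else r1 (k - (f0 - f1))) = lincomb GE e (\<lambda>k. - r2 k)"
    proof
      fix i
      have h1: "lincomb stk f0 (\<lambda>k. if k < f0 - f1 then c0 k else r1 (k - (f0 - f1))) i + lincomb GE e r2 i = 0"
        using fun_cong[OF cw0, of i] unfolding cw_fun by simp
      have h2: "lincomb GE e (\<lambda>k. - r2 k) i = - lincomb GE e r2 i" unfolding lincomb_def by (simp add: sum_negf)
      show "lincomb stk f0 (\<lambda>k. if k < f0 - f1 then c0 k else r1 (k - (f0 - f1))) i = lincomb GE e (\<lambda>k. - r2 k) i"
        unfolding h2 using h1 by (simp add: eq_neg_iff_add_eq_0)
    qed
    then have "\<forall>k<f0. (if k < f0 - f1 then c0 k else r1 (k - (f0 - f1))) = 0" by (rule KeyX)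
    moreover have "(0::nat) < f0" using assms(1) by simp
    ultimately have "(if 0 < f0 - f1 then c0 0 else r1 (0 - (f0 - f1))) = 0" by blast
    then show False using c00 unfolding c0_def by simp
  qed
  show ?thesis
  proof
    assume all: "\<forall>J. J \<subseteq> {..<n} \<and> card J = tau \<longrightarrow> ecss_authorized n f0 f1 e gQ gF1 GE (J \<union> {n..<n + u})"
    show "int tau \<ge> tau_u n F0 F1 GE e u"
    proof (rule ccontr)
      assume "\<not> int tau \<ge> tau_u n F0 F1 GE e u"
      then have "int (min d1 d2) \<le> int n - int tau" unfolding tauu by linarith
      then have lt: "min d1 d2 \<le> n - tau" using tn by linarith
      show False
      proof (cases "d1 \<le> d2")
        case True
        obtain x where x: "x \<in> set_plus_vec F0 V - set_plus_vec F1 V" "wt n x = d1"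
          using wt_diff_in[OF ne1] unfolding d1_def by blast
        obtain J where J: "J \<subseteq> {..<n}" "card J = tau" "\<forall>i\<in>J. x i = 0"
          using choose_J[OF _ tn, of x] x(2) lt True by auto
        obtain s w where sw: "s \<in> S" "s \<noteq> 0" "w \<in> W s" "\<forall>i<n. w i = x i" "\<forall>k<u. w (n+k) = 0"
          using XW_conv[OF ue, of x] x(1) unfolding assms(5,6) V_def by blast
        have "\<forall>i\<in>J \<union> {n..<n+u}. w i = 0"
        proof
          fix i assume i: "i \<in> J \<union> {n..<n+u}"
          show "w i = 0"
          proof (cases "i \<in> J")
            case True then show ?thesis using J sw(4) by auto
          next
            case False
            then have "i = n + (i - n)" "i - n < u" using i by auto
            then show ?thesis using sw(5) by metis
          qed
        qed
        then have "\<not> ecss_authorized n f0 f1 e gQ gF1 GE (J \<union> {n..<n+u})" by (rule G2[OF sw(1,2,3)])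
        then show False using all J by blast
      next
        case False
        obtain y where y: "y \<in> dual n (set_plus_vec F1 U) - dual n (set_plus_vec F0 U)" "wt n y = d2"
          using wt_diff_in[OF ne2] unfolding d2_def by blast
        obtain J where J: "J \<subseteq> {..<n}" "card J = tau" "\<forall>i\<in>J. y i = 0"
          using choose_J[OF _ tn, of y] y(2) lt False by auto
        have "\<not> ecss_authorized n f0 f1 e gQ gF1 GE (J \<union> {n..<n+u})"
          using ZW_conv[OF ue J(1) _ _ J(3)] y(1) unfolding assms(5,6) U_def by blast
        then show False using all J by blast
      qed
    qed
  next
    assume ge: "int tau \<ge> tau_u n F0 F1 GE e u"
    then have gt: "n - tau < min d1 d2" unfolding tauu using tn by linarith
    show "\<forall>J. J \<subseteq> {..<n} \<and> card J = tau \<longrightarrow> ecss_authorized n f0 f1 e gQ gF1 GE (J \<union> {n..<n + u})"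
    proof (intro allI impI)
      fix J assume J: "J \<subseteq> {..<n} \<and> card J = tau"
      show "ecss_authorized n f0 f1 e gQ gF1 GE (J \<union> {n..<n + u})"
      proof (rule G1)
        fix s w assume s: "s \<in> S" and w: "w \<in> W s" and van: "\<forall>i\<in>J \<union> {n..<n + u}. w i = 0"
        show "s = 0"
        proof (rule ccontr)
          assume "s \<noteq> 0"
          then obtain x where x: "x \<in> set_plus_vec F0 V - set_plus_vec F1 V" "\<forall>i\<in>J. x i = 0"
            using XW[OF ue s _ w van] J unfolding assms(5,6) V_def by blast
          have "d1 \<le> wt n x" unfolding d1_def by (rule wt_diff_le[OF x(1)])
          moreover have "wt n x \<le> n - tau" using wt_J J x(2) by blast
          ultimately show False using gt by linarith
        qed
      next
        fix s assume s: "s \<in> S"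
        have "\<exists>w\<in>W s. \<forall>i. i \<notin> J \<union> {n..<n+u} \<longrightarrow> w i = 0"
        proof (rule ZW[OF ue _ s])
          show "J \<subseteq> {..<n}" using J by blast
          fix y assume y: "y \<in> dual n (set_plus_vec (span_rows gF1 f1) (span_rows GE u))" "\<forall>i\<in>J. y i = 0"
          show "y \<in> dual n (set_plus_vec (span_rows stk f0) (span_rows GE u))"
          proof (rule ccontr)
            assume "y \<notin> dual n (set_plus_vec (span_rows stk f0) (span_rows GE u))"
            then have yd: "y \<in> dual n (set_plus_vec F1 U) - dual n (set_plus_vec F0 U)"
              using y(1) unfolding assms(5,6) U_def by blast
            have "d2 \<le> wt n y" unfolding d2_def by (rule wt_diff_le[OF yd])
            moreover have "wt n y \<le> n - tau" using wt_J J y(2) by blast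
            ultimately show False using gt by linarith
          qed
        qed
        then obtain w where w: "w \<in> W s" "\<forall>i. i \<notin> J \<union> {n..<n+u} \<longrightarrow> w i = 0" by blast
        then have "w \<in> Aw (J \<union> {n..<n + u})" unfolding Aw_iff using W_words by blast
        then show "\<exists>w\<in>W s. w \<in> Aw (J \<union> {n..<n + u})" using w(1) by blast
      qed
    qed
  qed
qed

end
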